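(* Let $C$ be the middle-thirds Cantor set, i.e. the limit set of the IFS $u_0(x)=x/3$, $u_2(x)=x/3+2/3$, let $\delta=\log2/\log3$ and $\mu=\mathcal{H}^\delta|_C/\mathcal{H}^\delta(C)$. Then for every $\varepsilon>0$, $\mu$-almost every $x\in C$ is badly symbolically approximable with respect to $\psi(q)=(\log q)^{-(2/\delta+\varepsilon)}$, and $\mu$-almost every $x\in C$ is symbolically well approximable with respect to $\psi(q)=(\log q)^{-2/\delta}$.
   Context: For a rational $p/q\in C$, let $\omega\in\{0,2\}^{\mathbb{N}}$ be its (unique) coding, i.e. $p/q=\sum_i\omega_i3^{-i}$; it is eventually periodic. With $n\ge0$ minimal such that $(\omega_i)_{i>n}$ is periodic and $m\ge1$ its minimal period, the intrinsic denominator is $q_{\mathrm{int}}:=3^n(3^m-1)$. A point $x\in C$ is badly symbolically approximable w.r.t. $\psi$ if there is $\varepsilon>0$ with $|x-p/q|\ge\varepsilon\psi(q_{\mathrm{int}})/q_{\mathrm{int}}$ for all $p/q\in\mathbb{Q}\cap C$; otherwise it is symbolically well approximable w.r.t. $\psi$. *)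

theory Defs
  imports "HOL-Analysis.Analysis"
begin

text \<open>A coding is a sequence w :: nat => real with values in {0,2}; w i stands
  for the paper's digit omega_(i+1), so the point coded is sum_i w i / 3^(i+1).\<close>

definition u0 :: "real \<Rightarrow> real" where "u0 x = x / 3"
definition u2 :: "real \<Rightarrow> real" where "u2 x = x / 3 + 2 / 3"

definition is_coding :: "(nat \<Rightarrow> real) \<Rightarrow> bool" where
  "is_coding w \<longleftrightarrow> (\<forall>i. w i \<in> {0, 2})"

definition coding_point :: "(nat \<Rightarrow> real) \<Rightarrow> real" where
  "coding_point w = (\<Sum>i. w i / 3 ^ (i + 1))"

definition cantor :: "real set" where
  "cantor = {x. \<exists>w. is_coding w \<and> x = coding_point w}"

definition coding_of :: "real \<Rightarrow> (nat \<Rightarrow> real)" where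
  "coding_of x = (THE w. is_coding w \<and> x = coding_point w)"

text \<open>(w_j)_{j >= n} is periodic with period m >= 1 (i.e. the paper's
  (omega_i)_{i>n} is periodic with period m).\<close>
definition periodic_from :: "(nat \<Rightarrow> real) \<Rightarrow> nat \<Rightarrow> nat \<Rightarrow> bool" where
  "periodic_from w n m \<longleftrightarrow> m \<ge> 1 \<and> (\<forall>j\<ge>n. w (j + m) = w j)"

definition preperiod :: "(nat \<Rightarrow> real) \<Rightarrow> nat" where
  "preperiod w = (LEAST n. \<exists>m. periodic_from w n m)"

definition min_period :: "(nat \<Rightarrow> real) \<Rightarrow> nat" where
  "min_period w = (LEAST m. periodic_from w (preperiod w) m)"

definition q_int :: "real \<Rightarrow> nat" where
  "q_int r = 3 ^ preperiod (coding_of r) * (3 ^ min_period (coding_of r) - 1)"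

definition badly_symb_approx :: "(real \<Rightarrow> real) \<Rightarrow> real \<Rightarrow> bool" where
  "badly_symb_approx \<psi> x \<longleftrightarrow>
     (\<exists>\<epsilon>>0. \<forall>r \<in> \<rat> \<inter> cantor.
        \<bar>x - r\<bar> \<ge> \<epsilon> * \<psi> (real (q_int r)) / real (q_int r))"

definition symb_well_approx :: "(real \<Rightarrow> real) \<Rightarrow> real \<Rightarrow> bool" where
  "symb_well_approx \<psi> x \<longleftrightarrow> \<not> badly_symb_approx \<psi> x"

text \<open>s-dimensional Hausdorff (outer) measure on the reals.
  Covers use bounded sets (Isabelle's diameter is 0 for unbounded sets).\<close>
definition hausdorff_pre :: "real \<Rightarrow> real \<Rightarrow> real set \<Rightarrow> ennreal" where
  "hausdorff_pre s r A =
     (INF U \<in> {U :: nat \<Rightarrow> real set. A \<subseteq> (\<Union>i. U i) \<and>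
                 (\<forall>i. bounded (U i) \<and> diameter (U i) \<le> r)}.
        (\<Sum>i. ennreal (diameter (U i) powr s)))"

definition hausdorff :: "real \<Rightarrow> real set \<Rightarrow> ennreal" where
  "hausdorff s A = (SUP r \<in> {0<..}. hausdorff_pre s r A)"

definition cantor_dim :: real where
  "cantor_dim = ln 2 / ln 3"

definition cantor_mu :: "real set \<Rightarrow> ennreal" where
  "cantor_mu A = hausdorff cantor_dim (A \<inter> cantor) / hausdorff cantor_dim cantor"

definition mu_ae :: "(real \<Rightarrow> bool) \<Rightarrow> bool" where
  "mu_ae P \<longleftrightarrow> cantor_mu {x \<in> cantor. \<not> P x} = 0"

end

theory Submission
  imports Defs
begin


definition shiftc :: "(nat \<Rightarrow> real) \<Rightarrow> nat \<Rightarrow> nat \<Rightarrow> real" where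
  "shiftc w k = (\<lambda>i. w (i + k))"

definition pval :: "(nat \<Rightarrow> real) \<Rightarrow> nat \<Rightarrow> real" where
  "pval w k = (\<Sum>i<k. w i / 3 ^ (i + 1))"

lemma is_coding_shift: "is_coding w \<Longrightarrow> is_coding (shiftc w k)"
  by (auto simp: is_coding_def shiftc_def)

lemma geom3: "(\<lambda>i. 2 / 3 ^ (i + 1) :: real) sums 1"
proof -
  have "(\<lambda>i. (1/3::real) ^ i) sums (1 / (1 - 1/3))"
    by (rule geometric_sums) simp
  then have "(\<lambda>i. (2/3) * (1/3::real) ^ i) sums ((2/3) * (1 / (1 - 1/3)))"
    by (rule sums_mult)
  moreover have "(\<lambda>i. (2/3) * (1/3::real) ^ i) = (\<lambda>i. 2 / 3 ^ (i + 1))"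
    by (auto simp: power_divide field_simps)
  ultimately show ?thesis by simp
qed

lemma cod_term_bound: "is_coding w \<Longrightarrow> 0 \<le> w i / 3 ^ (i + 1) \<and> w i / 3 ^ (i + 1) \<le> 2 / 3 ^ (i + 1)"
  unfolding is_coding_def by (cases "w i = 0") (auto simp: divide_right_mono)

lemma cod_summable: "is_coding w \<Longrightarrow> summable (\<lambda>i. w i / 3 ^ (i + 1))"
proof (rule summable_comparison_test'[where g = "\<lambda>i. 2 / 3 ^ (i + 1)" and N = 0])
  assume w: "is_coding w"
  show "summable (\<lambda>i. 2 / 3 ^ (i + 1) :: real)" using geom3 by (simp add: sums_iff)
  fix n
  have "\<bar>w n\<bar> \<le> 2" using w unfolding is_coding_def by (cases "w n = 0") auto
  then show "norm (w n / 3 ^ (n + 1)) \<le> 2 / 3 ^ (n + 1)"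
    by (simp add: divide_right_mono)
qed

lemma cp_nonneg: "is_coding w \<Longrightarrow> 0 \<le> coding_point w"
  unfolding coding_point_def using cod_summable cod_term_bound by (simp add: suminf_nonneg)

lemma cp_le1: "is_coding w \<Longrightarrow> coding_point w \<le> 1"
proof -
  assume w: "is_coding w"
  have "coding_point w \<le> (\<Sum>i. 2 / 3 ^ (i + 1))"
    unfolding coding_point_def
    apply (rule suminf_le) using cod_term_bound[OF w] cod_summable[OF w] geom3 by (auto simp: sums_iff)
  then show ?thesis using geom3 by (simp add: sums_iff)
qed

lemma cp_split: "is_coding w \<Longrightarrow> coding_point w = pval w k + coding_point (shiftc w k) / 3 ^ k"
proof -
  assume w: "is_coding w"
  have s: "summable (\<lambda>i. w i / 3 ^ (i + 1))" using cod_summable[OF w] .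
  have "coding_point w = (\<Sum>n. w (n + k) / 3 ^ (n + k + 1)) + pval w k"
    unfolding coding_point_def pval_def using suminf_split_initial_segment[OF s, of k] by simp
  moreover have "(\<lambda>n. w (n + k) / 3 ^ (n + k + 1)) = (\<lambda>n. (shiftc w k n / 3 ^ (n + 1)) / 3 ^ k)"
    by (auto simp: shiftc_def power_add field_simps)
  moreover have "(\<Sum>n. (shiftc w k n / 3 ^ (n + 1)) / 3 ^ k) = coding_point (shiftc w k) / 3 ^ k"
    unfolding coding_point_def
    by (rule suminf_divide[OF cod_summable[OF is_coding_shift[OF w]]])
  ultimately show ?thesis by simp
qed

lemma pval_Suc: "pval w (Suc k) = pval w k + w k / 3 ^ (k + 1)"
  by (simp add: pval_def)

lemma pval_cong: "(\<forall>i<k. w i = v i) \<Longrightarrow> pval w k = pval v k"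
  by (simp add: pval_def)


lemma cp_close:
  assumes w: "is_coding w" and v: "is_coding v" and eq: "\<forall>i<K. w i = v i"
  shows "\<bar>coding_point w - coding_point v\<bar> \<le> 1 / 3 ^ K"
proof -
  define a where "a = coding_point (shiftc w K)"
  define b where "b = coding_point (shiftc v K)"
  have h1: "coding_point w = pval w K + a / 3 ^ K" unfolding a_def by (rule cp_split[OF w])
  have h2: "coding_point v = pval v K + b / 3 ^ K" unfolding b_def by (rule cp_split[OF v])
  have h3: "pval w K = pval v K" by (rule pval_cong[OF eq])
  have "coding_point w - coding_point v = a / 3 ^ K - b / 3 ^ K" using h1 h2 h3 by linarith
  also have "\<dots> = (a - b) / 3 ^ K" by (simp add: diff_divide_distrib)
  finally have e: "coding_point w - coding_point v = (a - b) / 3 ^ K" .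
  have "\<bar>a - b\<bar> \<le> 1"
    using cp_nonneg[OF is_coding_shift[OF w, of K]] cp_le1[OF is_coding_shift[OF w, of K]]
      cp_nonneg[OF is_coding_shift[OF v, of K]] cp_le1[OF is_coding_shift[OF v, of K]]
    unfolding a_def b_def by linarith
  then have "\<bar>a - b\<bar> / 3 ^ K \<le> 1 / 3 ^ K" by (simp add: divide_right_mono)
  moreover have "\<bar>(a - b) / 3 ^ K\<bar> = \<bar>a - b\<bar> / 3 ^ K" by (rule abs_div_pos[symmetric]) simp
  ultimately show ?thesis unfolding e by linarith
qed
lemma cp_sep:
  assumes w: "is_coding w" and v: "is_coding v"
    and cl: "\<bar>coding_point w - coding_point v\<bar> < 1 / 3 ^ K"
  shows "i < K \<Longrightarrow> w i = v i"
proof (induction i rule: less_induct)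
  case (less i)
  show ?case
  proof (rule ccontr)
    assume ne: "w i \<noteq> v i"
    have "w i = 0 \<or> w i = 2" "v i = 0 \<or> v i = 2" using w v unfolding is_coding_def by auto
    then have d: "\<bar>w i - v i\<bar> = 2" using ne by auto
    have pe: "pval w i = pval v i" using less by (intro pval_cong) auto
    define a where "a = coding_point (shiftc w (Suc i))"
    define b where "b = coding_point (shiftc v (Suc i))"
    have h1: "coding_point w = pval w (Suc i) + a / 3 ^ Suc i" unfolding a_def by (rule cp_split[OF w])
    have h2: "coding_point v = pval v (Suc i) + b / 3 ^ Suc i" unfolding b_def by (rule cp_split[OF v])
    have h3: "pval w (Suc i) = pval w i + w i / 3 ^ Suc i" using pval_Suc[of w i] by simp
    have h4: "pval v (Suc i) = pval v i + v i / 3 ^ Suc i" using pval_Suc[of v i] by simp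
    have "coding_point w - coding_point v = w i / 3 ^ Suc i - v i / 3 ^ Suc i + (a / 3 ^ Suc i - b / 3 ^ Suc i)"
      using h1 h2 h3 h4 pe by linarith
    also have "\<dots> = (w i - v i + (a - b)) / 3 ^ Suc i" by (simp add: diff_divide_distrib add_divide_distrib)
    finally have e: "coding_point w - coding_point v = (w i - v i + (a - b)) / 3 ^ Suc i" .
    have t: "\<bar>a - b\<bar> \<le> 1"
      using cp_nonneg[OF is_coding_shift[OF w, of "Suc i"]] cp_le1[OF is_coding_shift[OF w, of "Suc i"]]
        cp_nonneg[OF is_coding_shift[OF v, of "Suc i"]] cp_le1[OF is_coding_shift[OF v, of "Suc i"]]
      unfolding a_def b_def by linarith
    have "\<bar>w i - v i + (a - b)\<bar> \<ge> 1" using d t by linarith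
    then have "\<bar>w i - v i + (a - b)\<bar> / 3 ^ Suc i \<ge> 1 / 3 ^ Suc i"
      by (simp add: divide_right_mono)
    moreover have "\<bar>(w i - v i + (a - b)) / 3 ^ Suc i\<bar> = \<bar>w i - v i + (a - b)\<bar> / 3 ^ Suc i"
      by (rule abs_div_pos[symmetric]) simp
    ultimately have g: "\<bar>coding_point w - coding_point v\<bar> \<ge> 1 / 3 ^ Suc i"
      unfolding e by linarith
    have "1 / 3 ^ K \<le> (1 / 3 ^ Suc i :: real)"
      using less.prems by (intro divide_left_mono power_increasing) auto
    then show False using cl g by linarith
  qed
qed

lemma coding_unique: "is_coding w \<Longrightarrow> is_coding v \<Longrightarrow> coding_point w = coding_point v \<Longrightarrow> w = v"
proof
  fix i assume w: "is_coding w" and v: "is_coding v" and e: "coding_point w = coding_point v"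
  show "w i = v i" by (rule cp_sep[OF w v, of "Suc i"]) (use e in auto)
qed

lemma coding_of_cp: "is_coding w \<Longrightarrow> coding_of (coding_point w) = w"
  unfolding coding_of_def by (rule the_equality) (auto dest: coding_unique)

lemma cantor_coding: "x \<in> cantor \<Longrightarrow> is_coding (coding_of x) \<and> coding_point (coding_of x) = x"
  unfolding cantor_def using coding_of_cp by auto

lemma cp_in_cantor: "is_coding w \<Longrightarrow> coding_point w \<in> cantor"
  unfolding cantor_def by auto


lemma periodic_iter: "periodic_from w n m \<Longrightarrow> j \<ge> n \<Longrightarrow> w (j + k * m) = w j"
proof (induction k)
  case 0 then show ?case by simp
next
  case (Suc k)
  have "w (j + Suc k * m) = w ((j + k * m) + m)" by (simp add: algebra_simps)
  also have "\<dots> = w (j + k * m)" using Suc.prems unfolding periodic_from_def by auto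
  finally show ?case using Suc by simp
qed

lemma periodic_restart:
  assumes p: "periodic_from w n m" and p': "periodic_from w n' m'"
  shows "periodic_from w n' m"
  unfolding periodic_from_def
proof (intro conjI allI impI)
  show "1 \<le> m" using p unfolding periodic_from_def by simp
  fix j assume j: "n' \<le> j"
  have m1: "m' \<ge> 1" using p' unfolding periodic_from_def by simp
  have big: "j + n * m' \<ge> n" using m1 by (metis le_add2 le_trans mult_le_mono1 nat_mult_1_right mult.commute)
  have "w (j + m) = w (j + m + n * m')" using periodic_iter[OF p', of "j + m" n] j by simp
  also have "\<dots> = w ((j + n * m') + m)" by (simp add: algebra_simps)
  also have "\<dots> = w (j + n * m')" using p big unfolding periodic_from_def by auto
  also have "\<dots> = w j" using periodic_iter[OF p' j] by simp
  finally show "w (j + m) = w j" .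
qed

lemma pre_props:
  assumes p: "periodic_from w n m"
  shows "preperiod w \<le> n" "periodic_from w (preperiod w) (min_period w)"
    "min_period w \<le> m" "1 \<le> min_period w"
proof -
  have ex: "\<exists>m. periodic_from w (preperiod w) m"
    unfolding preperiod_def by (rule LeastI_ex) (use p in blast)
  show "preperiod w \<le> n" unfolding preperiod_def by (rule Least_le) (use p in blast)
  from ex obtain m0 where m0: "periodic_from w (preperiod w) m0" by blast
  have pm: "periodic_from w (preperiod w) m" by (rule periodic_restart[OF p m0])
  show pp: "periodic_from w (preperiod w) (min_period w)"
    unfolding min_period_def by (rule LeastI[where P="\<lambda>m. periodic_from w (preperiod w) m", OF pm])
  show "min_period w \<le> m" unfolding min_period_def by (rule Least_le[where P="\<lambda>m. periodic_from w (preperiod w) m", OF pm])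
  show "1 \<le> min_period w" using pp unfolding periodic_from_def by simp
qed

lemma q_int_formula: "is_coding w \<Longrightarrow> q_int (coding_point w) = 3 ^ preperiod w * (3 ^ min_period w - 1)"
  unfolding q_int_def by (simp add: coding_of_cp)

lemma q_int_bounds:
  assumes w: "is_coding w" and p: "periodic_from w n m"
  shows "2 \<le> q_int (coding_point w)" "q_int (coding_point w) \<le> 3 ^ n * (3 ^ m - 1)"
proof -
  note pp = pre_props[OF p]
  have "(3::nat) ^ min_period w \<ge> 3 ^ 1" by (rule power_increasing) (use pp in auto)
  then have a: "3 ^ min_period w - 1 \<ge> (2::nat)" by simp
  have b: "(3::nat) ^ preperiod w \<ge> 1" by simp
  show "2 \<le> q_int (coding_point w)" unfolding q_int_formula[OF w]
    using mult_le_mono[OF b a] by simp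
  have c: "(3::nat) ^ preperiod w \<le> 3 ^ n" by (rule power_increasing) (use pp in auto)
  have d: "(3::nat) ^ min_period w - 1 \<le> 3 ^ m - 1"
    by (intro diff_le_mono power_increasing) (use pp in auto)
  show "q_int (coding_point w) \<le> 3 ^ n * (3 ^ m - 1)" unfolding q_int_formula[OF w]
    using mult_le_mono[OF c d] by simp
qed

lemma pval_scaled_int: "is_coding w \<Longrightarrow> 3 ^ k * pval w k \<in> \<int>"
proof -
  assume w: "is_coding w"
  have "3 ^ k * pval w k = (\<Sum>i<k. w i * 3 ^ (k - Suc i))"
    unfolding pval_def sum_distrib_left
  proof (rule sum.cong)
    fix i assume "i \<in> {..<k}"
    then have "k = (k - Suc i) + (i + 1)" by simp
    then have "(3::real) ^ k = 3 ^ (k - Suc i) * 3 ^ (i + 1)"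
      by (metis power_add)
    then show "3 ^ k * (w i / 3 ^ (i + 1)) = w i * 3 ^ (k - Suc i)" by simp
  qed simp
  also have "\<dots> \<in> \<int>"
  proof (rule Ints_sum)
    fix i
    have "w i \<in> \<int>" using w unfolding is_coding_def by (cases "w i = 0") auto
    then show "w i * 3 ^ (k - Suc i) \<in> \<int>" by simp
  qed
  finally show ?thesis .
qed

lemma cp_scaled: "is_coding w \<Longrightarrow> 3 ^ k * coding_point w = 3 ^ k * pval w k + coding_point (shiftc w k)"
  using cp_split[of w k] by (simp add: distrib_left)

lemma periodic_shift_eq: "periodic_from w n m \<Longrightarrow> shiftc w (n + m) = shiftc w n"
  unfolding periodic_from_def shiftc_def
proof
  fix i assume "1 \<le> m \<and> (\<forall>j\<ge>n. w (j + m) = w j)"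
  then show "w (i + (n + m)) = w (i + n)" by (metis add.assoc le_add2)
qed

lemma periodic_rational:
  assumes w: "is_coding w" and p: "periodic_from w n m"
  shows "coding_point w \<in> \<rat>"
proof -
  have e: "(3 ^ (n + m) - 3 ^ n) * coding_point w = 3 ^ (n + m) * pval w (n + m) - 3 ^ n * pval w n"
    using cp_scaled[OF w, of "n + m"] cp_scaled[OF w, of n] periodic_shift_eq[OF p]
    by (simp add: left_diff_distrib)
  have "(3 ^ (n + m) - 3 ^ n) * coding_point w \<in> \<int>"
    unfolding e using pval_scaled_int[OF w] by (intro Ints_diff) auto
  then obtain z where z: "(3 ^ (n + m) - 3 ^ n) * coding_point w = of_int z" by (auto elim: Ints_cases)
  have "(3::real) ^ (n + m) > 3 ^ n" using p unfolding periodic_from_def by (intro power_strict_increasing) auto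
  then have ne: "(3::real) ^ (n + m) - 3 ^ n \<noteq> 0" by simp
  have "coding_point w = of_int z / ((3 ^ (n + m) - 3 ^ n))" using z ne by (simp add: field_simps)
  also have "\<dots> \<in> \<rat>" by (intro Rats_divide) auto
  finally show ?thesis .
qed

lemma rational_periodic:
  assumes x: "x \<in> cantor" and q: "x \<in> \<rat>"
  shows "\<exists>n m. periodic_from (coding_of x) n m"
proof -
  define w where "w = coding_of x"
  have w: "is_coding w" and xw: "coding_point w = x" using cantor_coding[OF x] unfolding w_def by auto
  obtain a b where ab: "x = of_int a / of_int b" and b: "b > 0"
    using q by (metis Rats_cases' of_int_of_nat_eq) 
  define T where "T k = coding_point (shiftc w k)" for k
  define f where "f k = of_int b * T k" for k
  have fI: "f k \<in> \<int> \<and> 0 \<le> f k \<and> f k \<le> of_int b" for k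
  proof -
    have "3 ^ k * x = 3 ^ k * pval w k + T k" using cp_scaled[OF w, of k] xw unfolding T_def by simp
    then have fk: "f k = 3 ^ k * of_int a - of_int b * (3 ^ k * pval w k)"
      unfolding f_def using ab b by (simp add: field_simps)
    have int: "3 ^ k * of_int a - of_int b * (3 ^ k * pval w k) \<in> \<int>"
    proof (rule Ints_diff)
      show "3 ^ k * of_int a \<in> \<int>" by simp
      show "of_int b * (3 ^ k * pval w k) \<in> \<int>"
        by (rule Ints_mult) (use pval_scaled_int[OF w, of k] in auto)
    qed
    have T0: "0 \<le> T k" and T1: "T k \<le> 1" unfolding T_def
      using cp_nonneg cp_le1 is_coding_shift[OF w] by auto
    have "f k \<in> \<int>" using fk int by simp
    moreover have "0 \<le> f k" unfolding f_def using b T0 by simp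
    moreover have "f k \<le> of_int b" unfolding f_def using b T1 by (simp add: mult_left_le)
    ultimately show ?thesis by simp
  qed
  have "f ` UNIV \<subseteq> of_int ` {0..b}"
  proof
    fix y assume "y \<in> range f"
    then obtain k where k: "y = f k" by auto
    obtain z where z: "f k = of_int z" using fI[of k] by (auto elim: Ints_cases)
    have "0 \<le> z" "z \<le> b" using fI[of k] z by auto
    then show "y \<in> of_int ` {0..b}" using k z by auto
  qed
  then have "finite (range f)" by (rule finite_subset) auto
  then have "\<not> inj f" using finite_imageD infinite_UNIV_nat by blast
  then obtain a1 b1 where ne: "a1 \<noteq> b1" and eq: "f a1 = f b1" unfolding inj_def by blast
  then obtain c d where cd: "c < d" "f c = f d" by (metis linorder_neqE_nat)
  then have "T c = T d" unfolding f_def using b by simp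
  then have sh: "shiftc w c = shiftc w d" unfolding T_def
    by (intro coding_unique is_coding_shift w)
  have "periodic_from w c (d - c)"
    unfolding periodic_from_def
  proof (intro conjI allI impI)
    show "1 \<le> d - c" using cd by simp
    fix j assume j: "c \<le> j"
    have "w (j + (d - c)) = shiftc w d (j - c)" unfolding shiftc_def using j cd by simp
    also have "\<dots> = shiftc w c (j - c)" using sh by simp
    also have "\<dots> = w j" unfolding shiftc_def using j by simp
    finally show "w (j + (d - c)) = w j" .
  qed
  then show ?thesis unfolding w_def by blast
qed


lemma ln3_pos: "ln (3::real) > 0" by simp

lemma pow3_dim: "(1 / 3 ^ N :: real) powr cantor_dim = 1 / 2 ^ N"
proof -
  have "(1 / 3 ^ N :: real) powr cantor_dim = exp (cantor_dim * ln (1 / 3 ^ N))"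
    by (simp add: powr_def)
  also have "ln (1 / 3 ^ N :: real) = - (real N * ln 3)"
    by (simp add: ln_div ln_realpow)
  also have "cantor_dim * - (real N * ln 3) = real N * (- ln 2)"
    unfolding cantor_dim_def by (simp add: field_simps)
  also have "exp (real N * (- ln 2)) = exp (- ln 2) ^ N" by (rule exp_of_nat_mult)
  also have "exp (- ln (2::real)) = 1 / 2" by (simp add: exp_minus)
  finally show ?thesis by (simp add: power_divide)
qed

lemma cantor_dim_pos: "cantor_dim > 0"
  unfolding cantor_dim_def by simp

definition lval :: "real list \<Rightarrow> real" where
  "lval a = (\<Sum>i<length a. a ! i / 3 ^ (i + 1))"

lemma lval_prefix: "lval (map w [0..<N]) = pval w N"
  unfolding lval_def pval_def by simp

lemma cantor_in_interval:
  assumes x: "x \<in> cantor"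
  shows "x \<in> {lval (map (coding_of x) [0..<N]) .. lval (map (coding_of x) [0..<N]) + 1 / 3 ^ N}"
proof -
  define w where "w = coding_of x"
  have w: "is_coding w" and xw: "coding_point w = x" using cantor_coding[OF x] unfolding w_def by auto
  have e: "x = pval w N + coding_point (shiftc w N) / 3 ^ N" using cp_split[OF w, of N] xw by simp
  have t0: "0 \<le> coding_point (shiftc w N)" and t1: "coding_point (shiftc w N) \<le> 1"
    using cp_nonneg cp_le1 is_coding_shift[OF w] by auto
  have "0 \<le> coding_point (shiftc w N) / 3 ^ N" using t0 by simp
  moreover have "coding_point (shiftc w N) / 3 ^ N \<le> 1 / 3 ^ N" using t1 by (simp add: divide_right_mono)
  ultimately show ?thesis unfolding lval_prefix w_def[symmetric] using e by auto
qed

lemma ennreal_le_eps: "(\<And>e. e > 0 \<Longrightarrow> x \<le> ennreal e) \<Longrightarrow> x = (0::ennreal)"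
  by (metis ennreal_0 ennreal_le_epsilon le_zero_eq add.left_neutral)

lemma sum_square_bound:
  fixes h :: "nat \<times> nat \<Rightarrow> real"
  assumes "\<And>p. h p \<ge> 0"
  shows "(\<Sum>i<M. h (prod_decode i)) \<le> (\<Sum>k<M. \<Sum>t<M. h (k, t))"
proof -
  have "(\<Sum>i<M. h (prod_decode i)) = sum h (prod_decode ` {..<M})"
    by (simp add: sum.reindex inj_prod_decode)
  also have "\<dots> \<le> sum h ({..<M} \<times> {..<M})"
  proof (rule sum_mono2)
    show "prod_decode ` {..<M} \<subseteq> {..<M} \<times> {..<M}"
    proof
      fix p assume "p \<in> prod_decode ` {..<M}"
      then obtain i where i: "i < M" "p = prod_decode i" by auto
      obtain k t where p: "p = (k, t)" by (cases p)
      have "prod_encode (k, t) = i" using i p by (metis prod_decode_inverse)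
      then have "k \<le> i" "t \<le> i" using le_prod_encode_1 le_prod_encode_2 by metis+
      then have "k < M" "t < M" using i by auto
      then show "p \<in> {..<M} \<times> {..<M}" unfolding p by auto
    qed
  qed (use assms in auto)
  also have "\<dots> = (\<Sum>k<M. \<Sum>t<M. h (k, t))" by (simp add: sum.cartesian_product)
  finally show ?thesis .
qed

lemma hcover:
  fixes S :: "nat \<Rightarrow> real list set" and lev :: "nat \<Rightarrow> nat"
  assumes fin: "\<And>k. finite (S k)"
    and levr: "\<And>k. 1 / 3 ^ lev k \<le> \<rho>"
    and cov: "\<And>x. x \<in> E \<Longrightarrow> \<exists>k. map (coding_of x) [0..<lev k] \<in> S k"
    and E: "E \<subseteq> cantor"
    and sb: "\<And>M. (\<Sum>k<M. real (card (S k)) / 2 ^ lev k) \<le> \<eta>"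
  shows "hausdorff_pre cantor_dim \<rho> E \<le> ennreal \<eta>"
proof -
  define enum where "enum k = (SOME xs. set xs = S k \<and> distinct xs)" for k
  have en: "set (enum k) = S k \<and> distinct (enum k)" for k
    unfolding enum_def by (rule someI_ex) (rule finite_distinct_list[OF fin])
  have len: "length (enum k) = card (S k)" for k using en[of k] distinct_card by metis
  define Iv where "Iv k t = {lval (enum k ! t) .. lval (enum k ! t) + 1 / 3 ^ lev k}" for k t
  define U where "U i = (case prod_decode i of (k, t) \<Rightarrow> if t < length (enum k) then Iv k t else {})" for i
  define h where "h p = (case p of (k, t) \<Rightarrow> if t < card (S k) then 1 / 2 ^ lev k else (0::real))" for p
  have hnn: "h p \<ge> 0" for p unfolding h_def by (auto split: prod.splits)
  have Ud: "diameter (U i) powr cantor_dim = h (prod_decode i)" for i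
  proof -
    obtain k t where kt: "prod_decode i = (k, t)" by (cases "prod_decode i")
    show ?thesis
    proof (cases "t < length (enum k)")
      case True
      then have "U i = Iv k t" unfolding U_def kt by simp
      then have "diameter (U i) = 1 / 3 ^ lev k" unfolding Iv_def by simp
      then show ?thesis using True kt pow3_dim unfolding h_def len by simp
    next
      case False
      then have "U i = {}" unfolding U_def kt by simp
      then show ?thesis using False kt unfolding h_def len by simp
    qed
  qed
  have Uok: "bounded (U i) \<and> diameter (U i) \<le> \<rho>" for i
  proof -
    obtain k t where kt: "prod_decode i = (k, t)" by (cases "prod_decode i")
    show ?thesis
    proof (cases "t < length (enum k)")
      case True
      then have "U i = Iv k t" unfolding U_def kt by simp
      then show ?thesis unfolding Iv_def using levr[of k] by simp
    next
      case False
      then have "U i = {}" unfolding U_def kt by simp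
      then show ?thesis using levr[of 0] by (simp add: order_trans[OF _ levr[of 0]])
    qed
  qed
  have Ucov: "E \<subseteq> (\<Union>i. U i)"
  proof
    fix x assume xE: "x \<in> E"
    obtain k where k: "map (coding_of x) [0..<lev k] \<in> S k" using cov[OF xE] by blast
    then obtain t where t: "t < length (enum k)" "enum k ! t = map (coding_of x) [0..<lev k]"
      using en[of k] by (metis in_set_conv_nth)
    have "x \<in> Iv k t" unfolding Iv_def t(2) using cantor_in_interval E xE by auto
    moreover have "U (prod_encode (k, t)) = Iv k t" unfolding U_def using t by simp
    ultimately show "x \<in> (\<Union>i. U i)" by blast
  qed
  have psum: "(\<Sum>i<M. h (prod_decode i)) \<le> \<eta>" for M
  proof -
    have "(\<Sum>i<M. h (prod_decode i)) \<le> (\<Sum>k<M. \<Sum>t<M. h (k, t))" by (rule sum_square_bound[OF hnn])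
    also have "\<dots> \<le> (\<Sum>k<M. real (card (S k)) / 2 ^ lev k)"
    proof (rule sum_mono)
      fix k
      have "(\<Sum>t<M. h (k, t)) = (\<Sum>t\<in>{..<M} \<inter> {t. t < card (S k)}. 1 / 2 ^ lev k)"
        unfolding h_def by (subst sum.inter_restrict) auto
      also have "\<dots> \<le> (\<Sum>t\<in>{..<card (S k)}. 1 / 2 ^ lev k)"
        by (rule sum_mono2) auto
      also have "\<dots> = real (card (S k)) / 2 ^ lev k" by simp
      finally show "(\<Sum>t<M. h (k, t)) \<le> real (card (S k)) / 2 ^ lev k" .
    qed
    also have "\<dots> \<le> \<eta>" by (rule sb)
    finally show ?thesis .
  qed
  have summ: "summable (\<lambda>i. h (prod_decode i))"
  proof (rule bounded_imp_summable[where B = \<eta>])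
    show "0 \<le> h (prod_decode n)" for n by (rule hnn)
    show "(\<Sum>k\<le>n. h (prod_decode k)) \<le> \<eta>" for n
      using psum[of "Suc n"] by (simp only: lessThan_Suc_atMost)
  qed
  have "(\<Sum>i. h (prod_decode i)) \<le> \<eta>"
    by (rule suminf_le_const[OF summ]) (use psum in auto)
  then have "(\<Sum>i. ennreal (diameter (U i) powr cantor_dim)) \<le> ennreal \<eta>"
    unfolding Ud using suminf_ennreal2[OF hnn summ] by (simp add: ennreal_leI)
  moreover have "hausdorff_pre cantor_dim \<rho> E \<le> (\<Sum>i. ennreal (diameter (U i) powr cantor_dim))"
    unfolding hausdorff_pre_def by (rule INF_lower) (use Ucov Uok in auto)
  ultimately show ?thesis by (rule order_trans[rotated])
qed

lemma hausdorff_pre_anti: "\<rho>1 \<le> \<rho>2 \<Longrightarrow> hausdorff_pre s \<rho>2 A \<le> hausdorff_pre s \<rho>1 A"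
  unfolding hausdorff_pre_def
proof (rule INF_superset_mono)
  assume le: "\<rho>1 \<le> \<rho>2"
  show "{U. A \<subseteq> \<Union> (range U) \<and> (\<forall>i. bounded (U i) \<and> diameter (U i) \<le> \<rho>1)}
    \<subseteq> {U. A \<subseteq> \<Union> (range U) \<and> (\<forall>i. bounded (U i) \<and> diameter (U i) \<le> \<rho>2)}"
    using le by (auto intro: order_trans)
qed simp

lemma hausdorff_zero:
  assumes "\<And>N e. e > 0 \<Longrightarrow> hausdorff_pre cantor_dim (1 / 3 ^ N) E \<le> ennreal e"
  shows "hausdorff cantor_dim E = 0"
proof -
  have "hausdorff_pre cantor_dim r E = 0" if r: "r > 0" for r
  proof -
    obtain N where N: "(1/3::real) ^ N < r" using real_arch_pow_inv[OF r, of "1/3"] by auto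
    have "hausdorff_pre cantor_dim r E \<le> hausdorff_pre cantor_dim (1 / 3 ^ N) E"
      by (rule hausdorff_pre_anti) (use N in \<open>simp add: power_divide\<close>)
    then show ?thesis using assms by (intro ennreal_le_eps) (meson order_trans)
  qed
  then show ?thesis unfolding hausdorff_def by simp
qed

lemma mu_ae_from_null:
  assumes "hausdorff cantor_dim {x \<in> cantor. \<not> P x} = 0"
  shows "mu_ae P"
proof -
  have "{x \<in> cantor. \<not> P x} \<inter> cantor = {x \<in> cantor. \<not> P x}" by auto
  then show ?thesis unfolding mu_ae_def cantor_mu_def using assms by simp
qed


lemma level_props:
  fixes h :: real
  assumes h0: "0 < h" and h1: "h \<le> 1"
  shows "h \<le> 1 / 3 ^ (LEAST K. 1 / 3 ^ (K + 1) < h)" "1 / 3 ^ ((LEAST K. 1 / 3 ^ (K + 1) < h) + 1) < h"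
proof -
  obtain n where n: "(1/3::real) ^ n < h" using real_arch_pow_inv[OF h0, of "1/3"] by auto
  have ex: "\<exists>K. 1 / 3 ^ (K + 1) < h"
  proof
    have "1 / 3 ^ (n + 1) \<le> (1 / 3 ^ n :: real)" by (rule divide_left_mono) auto
    then have "1 / 3 ^ (n + 1) \<le> (1/3::real) ^ n" by (simp add: power_one_over)
    then show "1 / 3 ^ (n + 1) < h" using n by linarith
  qed
  show "1 / 3 ^ ((LEAST K. 1 / 3 ^ (K + 1) < h) + 1) < h" by (rule LeastI_ex[OF ex])
  show "h \<le> 1 / 3 ^ (LEAST K. 1 / 3 ^ (K + 1) < h)"
  proof (cases "(LEAST K. 1 / 3 ^ (K + 1) < h)")
    case 0 then show ?thesis using h1 by simp
  next
    case (Suc K')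
    then have "\<not> (1 / 3 ^ (K' + 1) < h)" by (metis lessI not_less_Least)
    then show ?thesis using Suc by simp
  qed
qed

lemma per_reduce:
  assumes p: "periodic_from \<rho> n m" and i: "n \<le> i"
  shows "\<rho> i = \<rho> (n + (i - n) mod m)"
proof -
  have "i = (n + (i - n) mod m) + ((i - n) div m) * m" using i by simp
  then have "\<rho> i = \<rho> ((n + (i - n) mod m) + ((i - n) div m) * m)" by simp
  also have "\<dots> = \<rho> (n + (i - n) mod m)" by (rule periodic_iter[OF p]) simp
  finally show ?thesis .
qed

lemma per_later: "periodic_from w n m \<Longrightarrow> periodic_from w (n + t) m"
  unfolding periodic_from_def by auto

definition Sper :: "nat \<Rightarrow> nat \<Rightarrow> nat \<Rightarrow> real list set" where
  "Sper n m K = {map \<rho> [0..<K] | \<rho>. is_coding \<rho> \<and> periodic_from \<rho> n m}"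

lemma Sper_card:
  assumes m: "m \<ge> 1"
  shows "finite (Sper n m K) \<and> card (Sper n m K) \<le> 2 ^ (n + m)"
proof -
  define idx where "idx i = (if i < n + m then i else n + (i - n) mod m)" for i
  define F where "F xs = map (\<lambda>i. xs ! idx i) [0..<K]" for xs :: "real list"
  define L where "L = {xs. set xs \<subseteq> {0, 2::real} \<and> length xs = n + m}"
  have idxlt: "idx i < n + m" for i unfolding idx_def using m
    by auto
  have sub: "Sper n m K \<subseteq> F ` L"
  proof
    fix a assume "a \<in> Sper n m K"
    then obtain \<rho> where a: "a = map \<rho> [0..<K]" and r: "is_coding \<rho>" "periodic_from \<rho> n m"
      unfolding Sper_def by auto
    have "F (map \<rho> [0..<n + m]) = a"
      unfolding a F_def
    proof (rule map_cong[OF refl])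
      fix i assume "i \<in> set [0..<K]"
      have "map \<rho> [0..<n + m] ! idx i = \<rho> (idx i)" using idxlt by simp
      also have "\<dots> = \<rho> i" unfolding idx_def using per_reduce[OF r(2), of i] by auto
      finally show "map \<rho> [0..<n + m] ! idx i = \<rho> i" .
    qed
    moreover have "map \<rho> [0..<n + m] \<in> L" unfolding L_def using r(1) unfolding is_coding_def by auto
    ultimately show "a \<in> F ` L" by blast
  qed
  have fL: "finite L" and cL: "card L = 2 ^ (n + m)"
  proof -
    have c2: "card {0, 2::real} = 2" by simp
    show "finite L" unfolding L_def by (rule finite_lists_length_eq) simp
    show "card L = 2 ^ (n + m)" unfolding L_def using card_lists_length_eq[of "{0, 2::real}" "n + m"]
      by (simp add: numeral_2_eq_2)
  qed
  have "finite (Sper n m K)" using sub fL finite_subset by blast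
  moreover have "card (Sper n m K) \<le> card (F ` L)" by (rule card_mono) (use sub fL in auto)
  moreover have "card (F ` L) \<le> card L" by (rule card_image_le[OF fL])
  ultimately show ?thesis using cL by simp
qed

lemma pow_2_3: "m \<ge> 1 \<Longrightarrow> (2::nat) ^ m + 1 \<le> 3 ^ m"
proof (induction m rule: dec_induct)
  case base then show ?case by simp
next
  case (step m) then show ?case by simp
qed

lemma Q_ge:
  assumes m: "m \<ge> 1"
  shows "(2::nat) ^ (n + m) \<le> 3 ^ n * (3 ^ m - 1)" "(3::nat) ^ (n + m - 1) \<le> 3 ^ n * (3 ^ m - 1)"
proof -
  have a: "(2::nat) ^ m \<le> 3 ^ m - 1" using pow_2_3[OF m] by simp
  have b: "(2::nat) ^ n \<le> 3 ^ n" by (simp add: power_mono)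
  show "(2::nat) ^ (n + m) \<le> 3 ^ n * (3 ^ m - 1)" using mult_le_mono[OF b a] by (simp add: power_add)
  obtain k where k: "m = Suc k" using m by (cases m) auto
  have "(3::nat) ^ k \<le> 3 ^ m - 1" unfolding k by simp
  then show "(3::nat) ^ (n + m - 1) \<le> 3 ^ n * (3 ^ m - 1)" using k by (simp add: power_add)
qed

lemma pow3_dim': "(3 ^ N :: real) powr cantor_dim = 2 ^ N"
proof -
  have "1 / (3 ^ N :: real) powr cantor_dim = 1 / 2 ^ N"
    using pow3_dim[of N] by (simp add: powr_divide)
  then show ?thesis by (simp add: field_simps)
qed

lemma term_bound:
  fixes c :: real and n m K :: nat
  assumes m: "m \<ge> 1" and c: "c > 0"
    and hK: "1 / 3 ^ (K + 1) < ln (real (3 ^ n * (3 ^ m - 1))) powr (- c) / real (3 ^ n * (3 ^ m - 1))"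
  shows "2 ^ (n + m) / 2 ^ K \<le> 4 * ln 2 powr (- (c * cantor_dim)) * (real n + 1) powr (- (c * cantor_dim) / 2)
          * real m powr (- (c * cantor_dim) / 2)"
proof -
  define Q where "Q = real (3 ^ n * (3 ^ m - 1))"
  define h where "h = ln Q powr (- c) / Q"
  define p where "p = c * cantor_dim"
  have p0: "p > 0" unfolding p_def using c cantor_dim_pos by simp
  have Q2: "2 ^ (n + m) \<le> Q" unfolding Q_def using Q_ge(1)[OF m, of n]
    by (metis of_nat_le_iff of_nat_numeral of_nat_power)
  have Q3: "3 ^ (n + m - 1) \<le> Q" unfolding Q_def using Q_ge(2)[OF m, of n]
    by (metis of_nat_le_iff of_nat_numeral of_nat_power)
  have "(0::real) < 2 ^ (n + m)" by simp
  then have Qpos: "Q > 0" using Q2 by linarith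
  have s1: "1 / 2 ^ (K + 1) \<le> h powr cantor_dim"
  proof -
    have "(1 / 3 ^ (K + 1) :: real) powr cantor_dim \<le> h powr cantor_dim"
      by (rule powr_mono2) (use hK cantor_dim_pos in \<open>auto simp: h_def Q_def\<close>)
    moreover have "(1 / 3 ^ (K + 1) :: real) powr cantor_dim = 1 / 2 ^ (K + 1)" by (rule pow3_dim)
    ultimately show ?thesis by linarith
  qed
  have s2: "h powr cantor_dim = ln Q powr (- p) / Q powr cantor_dim"
    unfolding h_def p_def by (simp add: powr_divide powr_powr)
  have s3: "2 ^ (n + m - 1) \<le> Q powr cantor_dim"
  proof -
    have "(3 ^ (n + m - 1) :: real) powr cantor_dim \<le> Q powr cantor_dim"
      by (rule powr_mono2) (use Q3 cantor_dim_pos in auto)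
    moreover have "(3 ^ (n + m - 1) :: real) powr cantor_dim = 2 ^ (n + m - 1)" by (rule pow3_dim')
    ultimately show ?thesis by linarith
  qed
  have nm: "real (n + m) \<ge> 1" using m by simp
  have s4: "real (n + m) * ln 2 \<le> ln Q"
  proof -
    have "ln (2 ^ (n + m) :: real) \<le> ln Q" using Q2 Qpos by (subst ln_le_cancel_iff) auto
    then show ?thesis by (simp add: ln_realpow)
  qed
  have l2: "ln (2::real) > 0" by simp
  have s5: "ln Q powr (- p) \<le> (real (n + m) * ln 2) powr (- p)"
    by (rule powr_mono2') (use p0 s4 nm l2 in auto)
  have s6: "(real (n + m) * ln 2) powr (- p) = real (n + m) powr (- p) * ln 2 powr (- p)"
    by (rule powr_mult)
  have s7: "real (n + m) powr (- p) \<le> ((real n + 1) * real m) powr (- p / 2)"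
  proof -
    have "real (n + m) powr (- p) = real (n + m) powr (2 * (- p / 2))" by simp
    also have "\<dots> = (real (n + m) powr 2) powr (- p / 2)" by (rule powr_powr[symmetric])
    also have "real (n + m) powr 2 = real (n + m) ^ 2" by simp
    also have "(real (n + m) ^ 2) powr (- p / 2) \<le> ((real n + 1) * real m) powr (- p / 2)"
    proof (rule powr_mono2')
      show "- p / 2 \<le> 0" using p0 by simp
      show "0 < (real n + 1) * real m" using m by simp
      have "(real n + 1) * real m \<le> real n * real m + real m * real m"
        using m by (simp add: algebra_simps)
      also have "\<dots> \<le> (real n + real m) ^ 2" by (simp add: power2_eq_square algebra_simps)
      finally show "(real n + 1) * real m \<le> real (n + m) ^ 2" by simp
    qed
    finally show ?thesis .
  qed
  have s8: "((real n + 1) * real m) powr (- p / 2) = (real n + 1) powr (- p / 2) * real m powr (- p / 2)"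
    by (rule powr_mult)
  have lQ: "ln Q powr (- p) \<le> ln 2 powr (- p) * ((real n + 1) powr (- p / 2) * real m powr (- p / 2))"
    using s5 s6 s7 s8 by (smt (verit) mult.commute mult_left_mono powr_ge_zero)
  have "2 ^ (n + m) / 2 ^ K = 2 * 2 ^ (n + m) * (1 / 2 ^ (K + 1) :: real)" by simp
  also have "\<dots> \<le> 2 * 2 ^ (n + m) * (ln Q powr (- p) / Q powr cantor_dim)"
    using s1 s2 by (intro mult_left_mono) auto
  also have "\<dots> \<le> 2 * 2 ^ (n + m) * (ln Q powr (- p) / 2 ^ (n + m - 1))"
    by (intro mult_left_mono divide_left_mono) (use s3 Qpos in auto)
  also have "\<dots> = 4 * ln Q powr (- p)"
  proof -
    have "(2::real) ^ (n + m) = 2 * 2 ^ (n + m - 1)" using m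
      by (metis Suc_diff_1 add_gr_0 less_le_trans power_Suc zero_less_one)
    then show ?thesis by simp
  qed
  also have "\<dots> \<le> 4 * (ln 2 powr (- p) * ((real n + 1) powr (- p / 2) * real m powr (- p / 2)))"
    using lQ by simp
  finally show ?thesis unfolding p_def Q_def h_def by (simp add: mult.assoc)
qed


lemma dist_irr:
  assumes x: "x \<notin> \<rat>" and D: "(D::nat) > 0"
  shows "\<exists>g>0. \<forall>z::int. \<bar>x - of_int z / real D\<bar> \<ge> g"
proof -
  define y where "y = real D * x"
  define fr where "fr = y - of_int \<lfloor>y\<rfloor>"
  have fr0: "0 \<le> fr" "fr < 1" unfolding fr_def by linarith+
  have frne: "fr \<noteq> 0"
  proof
    assume "fr = 0"
    then have "x = of_int \<lfloor>y\<rfloor> / real D" unfolding fr_def y_def using D by (simp add: field_simps)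
    then have "x \<in> \<rat>" by simp
    then show False using x by simp
  qed
  define g0 where "g0 = min fr (1 - fr)"
  have g0: "g0 > 0" unfolding g0_def using fr0 frne by simp
  have "\<bar>x - of_int z / real D\<bar> \<ge> g0 / real D" for z :: int
  proof -
    have "\<bar>y - of_int z\<bar> \<ge> g0"
    proof (cases "z \<le> \<lfloor>y\<rfloor>")
      case True
      then have "of_int z \<le> (of_int \<lfloor>y\<rfloor> :: real)" by linarith
      then show ?thesis unfolding g0_def fr_def by linarith
    next
      case False
      then have "of_int z \<ge> (of_int \<lfloor>y\<rfloor> :: real) + 1" by linarith
      then show ?thesis unfolding g0_def fr_def by linarith
    qed
    moreover have "\<bar>x - of_int z / real D\<bar> = \<bar>y - of_int z\<bar> / real D"
    proof -
      have "x - of_int z / real D = (y - of_int z) / real D" unfolding y_def using D by (simp add: field_simps)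
      then show ?thesis by (simp add: abs_div_pos[symmetric] D)
    qed
    ultimately show ?thesis using D by (simp add: divide_right_mono)
  qed
  then show ?thesis using g0 D by (intro exI[of _ "g0 / real D"]) auto
qed

lemma denom_int:
  assumes w: "is_coding w" and p: "periodic_from w n m"
  shows "real (3 ^ n * (3 ^ m - 1)) * coding_point w \<in> \<int>"
proof -
  have e: "(3 ^ (n + m) - 3 ^ n) * coding_point w = 3 ^ (n + m) * pval w (n + m) - 3 ^ n * pval w n"
    using cp_scaled[OF w, of "n + m"] cp_scaled[OF w, of n] periodic_shift_eq[OF p]
    by (simp add: left_diff_distrib)
  have "(3 ^ (n + m) - 3 ^ n) * coding_point w \<in> \<int>"
    unfolding e using pval_scaled_int[OF w] by (intro Ints_diff) auto
  moreover have "real (3 ^ n * (3 ^ m - 1)) = 3 ^ (n + m) - 3 ^ n"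
  proof -
    have "(1::nat) \<le> 3 ^ m" by simp
    then have "real (3 ^ m - 1 :: nat) = 3 ^ m - 1" by (simp add: of_nat_diff)
    then show ?thesis by (simp add: power_add algebra_simps)
  qed
  ultimately show ?thesis by simp
qed

lemma psi_le:
  fixes c q :: real
  assumes c: "c \<ge> 0" and q: "q \<ge> 2"
  shows "ln q powr (- c) \<le> ln 2 powr (- c)" "ln q powr (- c) / q \<le> ln 2 powr (- c)"
proof -
  have l: "0 < ln (2::real)" "ln 2 \<le> ln q" using q by auto
  show a: "ln q powr (- c) \<le> ln 2 powr (- c)" by (rule powr_mono2') (use c l in auto)
  have "ln q powr (- c) / q \<le> ln q powr (- c)" using q by (simp add: divide_le_eq mult_le_cancel_left1 )
  then show "ln q powr (- c) / q \<le> ln 2 powr (- c)" using a by linarith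
qed

lemma tail_partial:
  fixes a :: "nat \<Rightarrow> real"
  assumes s: "summable a" and nn: "\<And>i. a i \<ge> 0"
  shows "(\<Sum>n<M. if t \<le> n then a n else 0) \<le> (\<Sum>i. a (i + t))"
proof -
  have "(\<Sum>n<M. if t \<le> n then a n else 0) = (\<Sum>n\<in>{t..<M}. a n)"
    by (simp add: sum.If_cases) (rule sum.cong, auto)
  also have "\<dots> = (\<Sum>i<M - t. a (i + t))"
  proof (cases "t \<le> M")
    case True
    then show ?thesis
      by (rule_tac sum.reindex_bij_witness[where i = "\<lambda>n. n + t" and j = "\<lambda>n. n - t"]) auto
  next
    case False then show ?thesis by simp
  qed
  also have "\<dots> \<le> (\<Sum>i. a (i + t))"
    by (rule sum_le_suminf) (use s nn in auto)
  finally show ?thesis .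
qed

lemma partial_le_suminf:
  fixes a :: "nat \<Rightarrow> real"
  assumes s: "summable a" and nn: "\<And>i. a i \<ge> 0"
  shows "(\<Sum>n<M. a n) \<le> suminf a"
  by (rule sum_le_suminf) (use s nn in auto)


lemma part1_null:
  fixes eps :: real
  assumes eps: "eps > 0"
  shows "hausdorff cantor_dim {x \<in> cantor. \<not> badly_symb_approx (\<lambda>q. ln q powr (- (2 / cantor_dim + eps))) x} = 0"
proof (rule hausdorff_zero)
  fix N0 :: nat and e :: real assume e: "e > 0"
  define c where "c = 2 / cantor_dim + eps"
  define \<psi> where "\<psi> = (\<lambda>q::real. ln q powr (- c))"
  define E where "E = {x \<in> cantor. \<not> badly_symb_approx \<psi> x}"
  have c0: "c > 0" unfolding c_def using eps cantor_dim_pos by (intro add_pos_pos divide_pos_pos) auto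
  define p where "p = c * cantor_dim"
  have p2: "p > 2" unfolding p_def c_def using eps cantor_dim_pos by (simp add: field_simps)
  define a where "a j = (real j + 1) powr (- p / 2)" for j :: nat
  have a_nn: "a j \<ge> 0" for j unfolding a_def by simp
  have a_sum: "summable a"
  proof -
    have "summable (\<lambda>n. real n powr (- p / 2))" using p2 by (subst summable_real_powr_iff) simp
    then have "summable (\<lambda>n. real (Suc n) powr (- p / 2))" by (subst summable_Suc_iff)
    then show ?thesis unfolding a_def by (simp add: add.commute)
  qed
  define A where "A = suminf a"
  have A0: "A \<ge> 0" unfolding A_def using a_sum a_nn by (simp add: suminf_nonneg)
  define L where "L = ln 2 powr (- p)"
  have L0: "L \<ge> 0" unfolding L_def by simp
  define r where "r = e / (8 * L * A + 1)"
  have "0 \<le> 8 * L * A" using L0 A0 by simp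
  then have den: "8 * L * A + 1 > 0" by linarith
  have r0: "r > 0" unfolding r_def using e den by simp
  obtain t where t: "\<forall>n\<ge>t. norm (\<Sum>i. a (i + n)) < r" using suminf_exist_split[OF r0 a_sum] by blast
  define tl where "tl = (\<Sum>i. a (i + t))"
  have tl0: "tl \<ge> 0" unfolding tl_def by (rule suminf_nonneg) (use a_sum a_nn in auto)
  have tlr: "tl < r" using t tl0 unfolding tl_def by auto
  define B where "B = ln 2 powr (- c)"
  have B0: "B > 0" unfolding B_def by simp
  obtain n1 where n1: "B * 3 ^ N0 < 3 ^ n1" using real_arch_pow[of 3 "B * 3 ^ N0"] by auto
  define s0 where "s0 = t + 1 + n1"
  define Q where "Q n m = (3::nat) ^ n * (3 ^ m - 1)" for n m
  define hh where "hh n m = \<psi> (real (Q n m)) / real (Q n m)" for n m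
  define Kl where "Kl n m = (LEAST K. 1 / 3 ^ (K + 1) < hh n m)" for n m
  define incl where "incl n m \<longleftrightarrow> s0 \<le> n \<or> s0 \<le> m" for n m :: nat
  have Q2: "real (Q n m) \<ge> 2" if "m \<ge> 1" for n m
  proof -
    have "(2::nat) ^ 1 \<le> 2 ^ (n + m)" by (rule power_increasing) (use that in auto)
    then have "(2::nat) \<le> Q n m" using Q_ge(1)[OF that, of n] unfolding Q_def by simp
    then show ?thesis by simp
  qed
  have hh_ok: "0 < hh n m \<and> hh n m \<le> 1 / 3 ^ N0" if m1: "m \<ge> 1" and inc: "incl n m" for n m
  proof -
    have q2: "real (Q n m) \<ge> 2" by (rule Q2[OF m1])
    have lnpos: "ln (real (Q n m)) > 0" using q2 by simp
    have pos: "0 < hh n m" unfolding hh_def \<psi>_def using q2 lnpos by simp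
    have "n + m - 1 \<ge> n1" using inc m1 unfolding incl_def s0_def by auto
    then have "(3::nat) ^ n1 \<le> 3 ^ (n + m - 1)" by (rule power_increasing) simp
    then have "(3::nat) ^ n1 \<le> Q n m" using Q_ge(2)[OF m1, of n] unfolding Q_def by linarith
    then have q3: "(3::real) ^ n1 \<le> real (Q n m)" by (metis of_nat_le_iff of_nat_numeral of_nat_power)
    have a1: "hh n m \<le> B / real (Q n m)"
      unfolding hh_def \<psi>_def B_def using psi_le(1)[of c "real (Q n m)"] c0 q2
      by (intro divide_right_mono) auto
    have qp: "0 < real (Q n m)" using q2 by linarith
    have a2: "B / real (Q n m) \<le> B / 3 ^ n1" using q3 B0 qp by (intro divide_left_mono) auto
    have a3: "B / 3 ^ n1 < 1 / 3 ^ N0" using n1 by (simp add: field_simps)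
    show ?thesis using pos a1 a2 a3 by linarith
  qed
  have Kl_ok: "hh n m \<le> 1 / 3 ^ (Kl n m) \<and> 1 / 3 ^ (Kl n m + 1) < hh n m \<and> N0 \<le> Kl n m"
    if m1: "m \<ge> 1" and inc: "incl n m" for n m
  proof -
    have h: "0 < hh n m" "hh n m \<le> 1 / 3 ^ N0" using hh_ok[OF m1 inc] by auto
    have h1: "hh n m \<le> 1" using h(2) by (smt (verit) divide_le_eq_1 one_le_power)
    note lp = level_props[OF h(1) h1, folded Kl_def]
    have "N0 \<le> Kl n m"
    proof (rule ccontr)
      assume "\<not> N0 \<le> Kl n m"
      then have "Kl n m + 1 \<le> N0" by simp
      then have "(3::real) ^ (Kl n m + 1) \<le> 3 ^ N0" by (rule power_increasing) simp
      then have "1 / 3 ^ N0 \<le> (1 / 3 ^ (Kl n m + 1) :: real)" by (intro divide_left_mono) auto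
      then show False using lp(2) h(2) by linarith
    qed
    then show ?thesis using lp by simp
  qed
  define S where "S k = (case prod_decode k of (n, m') \<Rightarrow>
      if incl n (m' + 1) then Sper n (m' + 1) (Kl n (m' + 1)) else {})" for k
  define lev where "lev k = (case prod_decode k of (n, m') \<Rightarrow>
      if incl n (m' + 1) then Kl n (m' + 1) else N0)" for k
  have "hausdorff_pre cantor_dim (1 / 3 ^ N0) E \<le> ennreal e"
  proof (rule hcover)
    show "finite (S k)" for k
    proof -
      obtain n m' where nm: "prod_decode k = (n, m')" by (cases "prod_decode k")
      show ?thesis unfolding S_def nm using Sper_card[of "m' + 1" n] by simp
    qed
    show "1 / 3 ^ lev k \<le> (1 / 3 ^ N0 :: real)" for k
    proof -
      obtain n m' where nm: "prod_decode k = (n, m')" by (cases "prod_decode k")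
      have "N0 \<le> lev k" unfolding lev_def nm using Kl_ok[of "m' + 1" n] by simp
      then have "(3::real) ^ N0 \<le> 3 ^ lev k" by (rule power_increasing) simp
      then show ?thesis by (intro divide_left_mono) auto
    qed
    show "E \<subseteq> cantor" unfolding E_def by auto
    show "\<exists>k. map (coding_of x) [0..<lev k] \<in> S k" if xE: "x \<in> E" for x
    proof -
      have xC: "x \<in> cantor" and nb: "\<not> badly_symb_approx \<psi> x" using xE unfolding E_def by auto
      define w where "w = coding_of x"
      have w: "is_coding w" "coding_point w = x" using cantor_coding[OF xC] unfolding w_def by auto
      have found: "\<exists>k. map w [0..<lev k] \<in> S k"
      proof (cases "x \<in> \<rat>")
        case True
        obtain n0 m0 where p0: "periodic_from w n0 m0" using rational_periodic[OF xC True] unfolding w_def by blast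
        define n where "n = n0 + s0"
        have pn: "periodic_from w n m0" unfolding n_def by (rule per_later[OF p0])
        have m01: "m0 \<ge> 1" using p0 unfolding periodic_from_def by simp
        have inc: "incl n m0" unfolding incl_def n_def by simp
        obtain mm where mm: "m0 = Suc mm" using m01 by (cases m0) auto
        define k where "k = prod_encode (n, mm)"
        have dk: "prod_decode k = (n, mm)" unfolding k_def by simp
        have "map w [0..<Kl n m0] \<in> Sper n m0 (Kl n m0)" unfolding Sper_def using w pn by blast
        then have "map w [0..<lev k] \<in> S k" unfolding S_def lev_def dk using inc unfolding mm by simp
        then show ?thesis by blast
      next
        case False
        define D :: nat where "D = fact (3 ^ (2 * s0))"
        have D0: "D > 0" unfolding D_def by simp
        obtain g where g0: "g > 0" and g: "\<And>z::int. \<bar>x - of_int z / real D\<bar> \<ge> g"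
          using dist_irr[OF False D0] by blast
        define e' where "e' = min 1 (g / B)"
        have e'0: "e' > 0" unfolding e'_def using g0 B0 by simp
        obtain r where rQ: "r \<in> \<rat> \<inter> cantor"
          and rc: "\<bar>x - r\<bar> < e' * \<psi> (real (q_int r)) / real (q_int r)"
          using nb e'0 unfolding badly_symb_approx_def by (meson not_le)
        define \<rho> where "\<rho> = coding_of r"
        have \<rho>: "is_coding \<rho>" "coding_point \<rho> = r" using cantor_coding[of r] rQ unfolding \<rho>_def by auto
        obtain n0 m0 where "periodic_from \<rho> n0 m0" using rational_periodic[of r] rQ unfolding \<rho>_def by blast
        note pp = pre_props[OF this]
        define n where "n = preperiod \<rho>"
        define m where "m = min_period \<rho>"
        have pnm: "periodic_from \<rho> n m" using pp unfolding n_def m_def by simp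
        have m1: "m \<ge> 1" using pp unfolding m_def by simp
        have qr: "q_int r = Q n m" using q_int_formula[OF \<rho>(1)] \<rho>(2) unfolding Q_def n_def m_def by simp
        have rc': "\<bar>x - r\<bar> < e' * hh n m" using rc unfolding qr hh_def by simp
        have hle: "hh n m \<le> B" unfolding hh_def \<psi>_def B_def by (rule psi_le(2)) (use c0 Q2[OF m1] in auto)
        have hnn: "hh n m \<ge> 0" unfolding hh_def \<psi>_def by simp
        have inc: "incl n m"
        proof (rule ccontr)
          assume ni: "\<not> incl n m"
          then have ns: "n < s0" "m < s0" unfolding incl_def by auto
          have "Q n m \<le> 3 ^ n * 3 ^ m" unfolding Q_def by simp
          also have "\<dots> = 3 ^ (n + m)" by (simp add: power_add)
          also have "\<dots> \<le> 3 ^ (2 * s0)" by (rule power_increasing) (use ns in auto)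
          finally have "Q n m \<le> 3 ^ (2 * s0)" .
          moreover have "1 \<le> Q n m" using Q2[OF m1, of n] by simp
          ultimately have "Q n m dvd D" unfolding D_def by (intro dvd_fact)
          then obtain j where j: "D = Q n m * j" by blast
          have "real (Q n m) * r \<in> \<int>" using denom_int[OF \<rho>(1) pnm] \<rho>(2) unfolding Q_def by simp
          then have "real j * (real (Q n m) * r) \<in> \<int>" by (metis Ints_mult Ints_of_nat)
          then have "real D * r \<in> \<int>" unfolding j by (simp add: algebra_simps)
          then obtain z where z: "real D * r = of_int z" by (auto elim: Ints_cases)
          have "r = of_int z / real D" using z D0 by (simp add: field_simps)
          then have "\<bar>x - r\<bar> \<ge> g" using g by simp
          moreover have "e' * hh n m \<le> (g / B) * B"
            by (intro mult_mono) (use hle hnn g0 B0 in \<open>auto simp: e'_def\<close>)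
          ultimately show False using rc' B0 by simp
        qed
        have ko: "hh n m \<le> 1 / 3 ^ (Kl n m)" using Kl_ok[OF m1 inc] by simp
        have "e' * hh n m \<le> hh n m" using hnn e'0 unfolding e'_def by (intro mult_left_le_one_le) auto
        then have close: "\<bar>coding_point w - coding_point \<rho>\<bar> < 1 / 3 ^ (Kl n m)"
          using rc' ko w(2) \<rho>(2) by linarith
        have eqm: "map w [0..<Kl n m] = map \<rho> [0..<Kl n m]"
          by (rule map_cong[OF refl]) (use cp_sep[OF w(1) \<rho>(1) close] in auto)
        have "map \<rho> [0..<Kl n m] \<in> Sper n m (Kl n m)" unfolding Sper_def using \<rho>(1) pnm by blast
        then have mem: "map w [0..<Kl n m] \<in> Sper n m (Kl n m)" unfolding eqm .
        obtain mm where mm: "m = Suc mm" using m1 by (cases m) auto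
        define k where "k = prod_encode (n, mm)"
        have dk: "prod_decode k = (n, mm)" unfolding k_def by simp
        have "map w [0..<lev k] \<in> S k" unfolding S_def lev_def dk using inc mem unfolding mm by simp
        then show ?thesis by blast
      qed
      then show ?thesis unfolding w_def .
    qed
    show "(\<Sum>k<M. real (card (S k)) / 2 ^ lev k) \<le> e" for M
    proof -
      define X where "X n = (if t \<le> n then a n else 0)" for n
      define G where "G pr = (case pr of (n, m') \<Rightarrow> if t \<le> n \<or> t \<le> m' then 4 * L * a n * a m' else 0)" for pr
      have Xnn: "X n \<ge> 0" for n unfolding X_def using a_nn by simp
      have Gnn: "G pr \<ge> 0" for pr unfolding G_def using L0 a_nn by (auto split: prod.splits)
      have gG: "real (card (S k)) / 2 ^ lev k \<le> G (prod_decode k)" for k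
      proof -
        obtain n m' where nm: "prod_decode k = (n, m')" by (cases "prod_decode k")
        show ?thesis
        proof (cases "incl n (m' + 1)")
          case False
          then show ?thesis unfolding S_def nm using Gnn[of "(n, m')"] by simp
        next
          case True
          have m1: "m' + 1 \<ge> 1" by simp
          have ko: "1 / 3 ^ (Kl n (m' + 1) + 1) < hh n (m' + 1)" using Kl_ok[OF m1 True] by simp
          have tb: "2 ^ (n + (m' + 1)) / 2 ^ Kl n (m' + 1) \<le> 4 * ln 2 powr (- (c * cantor_dim))
              * (real n + 1) powr (- (c * cantor_dim) / 2) * real (m' + 1) powr (- (c * cantor_dim) / 2)"
            by (rule term_bound[OF m1 c0]) (use ko in \<open>simp only: hh_def \<psi>_def Q_def\<close>)
          have r1: "real (m' + 1) = real m' + 1" by simp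
          have tb2: "2 ^ (n + (m' + 1)) / 2 ^ Kl n (m' + 1) \<le> 4 * L * a n * a m'"
            using tb unfolding L_def a_def p_def r1 by (simp add: mult.assoc)
          have cdl: "card (S k) \<le> 2 ^ (n + (m' + 1))"
            unfolding S_def nm using True Sper_card[OF m1, of n "Kl n (m' + 1)"] by simp
          then have cd: "real (card (S k)) \<le> 2 ^ (n + (m' + 1))"
            by (metis of_nat_le_iff of_nat_numeral of_nat_power)
          have levk: "lev k = Kl n (m' + 1)" unfolding lev_def nm using True by simp
          have "real (card (S k)) / 2 ^ lev k \<le> 2 ^ (n + (m' + 1)) / 2 ^ Kl n (m' + 1)"
            unfolding levk using cd by (simp add: divide_right_mono)
          also have "\<dots> \<le> 4 * L * a n * a m'" by (rule tb2)
          also have "\<dots> = G (prod_decode k)"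
            unfolding G_def nm using True unfolding incl_def s0_def by auto
          finally show ?thesis .
        qed
      qed
      have sX: "(\<Sum>n<M. X n) \<le> tl" unfolding X_def tl_def by (rule tail_partial[OF a_sum a_nn])
      have sA: "(\<Sum>n<M. a n) \<le> A" unfolding A_def by (rule partial_le_suminf[OF a_sum a_nn])
      have sX0: "(\<Sum>n<M. X n) \<ge> 0" using Xnn by (simp add: sum_nonneg)
      have sA0: "(\<Sum>n<M. a n) \<ge> 0" using a_nn by (simp add: sum_nonneg)
      have pw: "G (n, m') \<le> 4 * L * X n * a m' + 4 * L * a n * X m'" for n m'
      proof -
        have t1: "0 \<le> 4 * L * X n * a m'" "0 \<le> 4 * L * a n * X m'" "0 \<le> L * (a n * a m')"
          using L0 Xnn a_nn by simp_all
        show ?thesis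
        proof (cases "t \<le> n")
          case True then show ?thesis unfolding G_def X_def using t1 by simp
        next
          case False
          then show ?thesis unfolding G_def X_def using t1 by simp
        qed
      qed
      have "(\<Sum>k<M. real (card (S k)) / 2 ^ lev k) \<le> (\<Sum>k<M. G (prod_decode k))"
        by (rule sum_mono) (rule gG)
      also have "\<dots> \<le> (\<Sum>n<M. \<Sum>m'<M. G (n, m'))" by (rule sum_square_bound[OF Gnn])
      also have "\<dots> \<le> (\<Sum>n<M. \<Sum>m'<M. 4 * L * X n * a m' + 4 * L * a n * X m')"
        by (intro sum_mono) (rule pw)
      also have "\<dots> = 4 * L * ((\<Sum>n<M. X n) * (\<Sum>m'<M. a m')) + 4 * L * ((\<Sum>n<M. a n) * (\<Sum>m'<M. X m'))"
      proof -
        have e1: "4 * L * ((\<Sum>n<M. X n) * (\<Sum>m'<M. a m')) = (\<Sum>n<M. \<Sum>m'<M. 4 * L * X n * a m')"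
          unfolding sum_product unfolding sum_distrib_left by (simp only: mult.assoc)
        have e2: "4 * L * ((\<Sum>n<M. a n) * (\<Sum>m'<M. X m')) = (\<Sum>n<M. \<Sum>m'<M. 4 * L * a n * X m')"
          unfolding sum_product unfolding sum_distrib_left by (simp only: mult.assoc)
        show ?thesis unfolding sum.distrib e1 e2 ..
      qed
      also have "\<dots> \<le> 4 * L * (tl * A) + 4 * L * (A * tl)"
        by (intro add_mono mult_left_mono mult_mono) (use sX sA sX0 sA0 L0 A0 tl0 in auto)
      also have "\<dots> = (8 * L * A) * tl" by (simp add: algebra_simps)
      also have "\<dots> \<le> (8 * L * A) * r" using tlr L0 A0 by (intro mult_left_mono) auto
      also have "\<dots> \<le> e"
      proof -
        have "(8 * L * A) * r = e * ((8 * L * A) / (8 * L * A + 1))" unfolding r_def by (simp add: field_simps)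
        also have "\<dots> \<le> e * 1" using den e by (intro mult_left_mono) auto
        finally show ?thesis by simp
      qed
      finally show ?thesis .
    qed
  qed
  then show "hausdorff_pre cantor_dim (1 / 3 ^ N0)
      {x \<in> cantor. \<not> badly_symb_approx (\<lambda>q. ln q powr (- (2 / cantor_dim + eps))) x} \<le> ennreal e"
    unfolding E_def \<psi>_def c_def .
qed


definition W :: "nat \<Rightarrow> real list set" where
  "W N = {xs. set xs \<subseteq> {0, 2} \<and> length xs = N}"

definition blk :: "real list \<Rightarrow> nat \<Rightarrow> nat \<Rightarrow> real list" where
  "blk xs a L = take L (drop a xs)"

definition NoRep :: "real list \<Rightarrow> nat \<Rightarrow> bool" where
  "NoRep xs L \<longleftrightarrow> (\<forall>a b. a < b \<longrightarrow> b + L \<le> length xs \<longrightarrow> blk xs a L \<noteq> blk xs b L)"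

lemma W_finite: "finite (W N)" and W_card: "card (W N) = 2 ^ N"
proof -
  show "finite (W N)" unfolding W_def by (rule finite_lists_length_eq) simp
  show "card (W N) = 2 ^ N" unfolding W_def using card_lists_length_eq[of "{0, 2::real}" N]
    by (simp add: numeral_2_eq_2)
qed

lemma blk_take: "a + L \<le> p \<Longrightarrow> blk (take p xs) a L = blk xs a L"
  unfolding blk_def by (simp add: drop_take min_def)

lemma blk_append1: "a + L \<le> length u \<Longrightarrow> blk (u @ v) a L = blk u a L"
  unfolding blk_def by simp

lemma blk_append2: "length v = L \<Longrightarrow> blk (u @ v) (length u) L = v"
  unfolding blk_def by simp

lemma NoRep_take: "NoRep xs L \<Longrightarrow> NoRep (take p xs) L"
  unfolding NoRep_def by (auto simp: blk_take)

lemma take_W: "ys \<in> W N \<Longrightarrow> p \<le> N \<Longrightarrow> take p ys \<in> W p"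
  unfolding W_def by (auto dest: in_set_takeD)

lemma blk_W: "xs \<in> W N \<Longrightarrow> a + L \<le> N \<Longrightarrow> blk xs a L \<in> W L"
  unfolding W_def blk_def by (auto dest!: in_set_takeD in_set_dropD)

lemma fibre_bound:
  assumes A: "A \<subseteq> W p"
  shows "card {ys \<in> W (p + d). take p ys \<in> A \<and> Pr ys} \<le> (\<Sum>u\<in>A. card {v \<in> W d. Pr (u @ v)})"
proof -
  have fA: "finite A" using A W_finite finite_subset by blast
  have "{ys \<in> W (p + d). take p ys \<in> A \<and> Pr ys} \<subseteq> (\<Union>u\<in>A. (\<lambda>v. u @ v) ` {v \<in> W d. Pr (u @ v)})"
  proof
    fix ys assume ys: "ys \<in> {ys \<in> W (p + d). take p ys \<in> A \<and> Pr ys}"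
    have "drop p ys \<in> W d" using ys unfolding W_def by (auto dest: in_set_dropD)
    moreover have "Pr (take p ys @ drop p ys)" using ys by simp
    ultimately show "ys \<in> (\<Union>u\<in>A. (\<lambda>v. u @ v) ` {v \<in> W d. Pr (u @ v)})"
      using ys by (intro UN_I[of "take p ys"]) (auto intro!: image_eqI[of _ _ "drop p ys"])
  qed
  then have "card {ys \<in> W (p + d). take p ys \<in> A \<and> Pr ys} \<le> card (\<Union>u\<in>A. (\<lambda>v. u @ v) ` {v \<in> W d. Pr (u @ v)})"
    by (rule card_mono[rotated]) (use fA W_finite in auto)
  also have "\<dots> \<le> (\<Sum>u\<in>A. card ((\<lambda>v. u @ v) ` {v \<in> W d. Pr (u @ v)}))"
    by (rule card_UN_le[OF fA])
  also have "\<dots> \<le> (\<Sum>u\<in>A. card {v \<in> W d. Pr (u @ v)})"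
    by (rule sum_mono) (rule card_image_le, use W_finite in auto)
  finally show ?thesis .
qed

lemma free_ext:
  assumes A: "A \<subseteq> W p"
  shows "card {ys \<in> W (p + d). take p ys \<in> A} \<le> card A * 2 ^ d"
proof -
  have "card {ys \<in> W (p + d). take p ys \<in> A \<and> True} \<le> (\<Sum>u\<in>A. card {v \<in> W d. True})"
    by (rule fibre_bound[OF A])
  also have "\<dots> = card A * 2 ^ d" using W_card by simp
  finally show ?thesis by simp
qed

lemma count_step:
  assumes A: "A \<subseteq> W p" and L1: "1 \<le> L" and Lp: "L \<le> p"
  shows "card {ys \<in> W (p + L). take p ys \<in> A \<and> NoRep ys L} \<le> card A * (2 ^ L - (p - L + 1))"
proof -
  have fib: "card {v \<in> W L. NoRep (u @ v) L} \<le> 2 ^ L - (p - L + 1)" if u: "u \<in> A" for u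
  proof (cases "{v \<in> W L. NoRep (u @ v) L} = {}")
    case True then show ?thesis by (metis card.empty zero_le)
  next
    case False
    then obtain v0 where v0: "v0 \<in> W L" "NoRep (u @ v0) L" by blast
    have lu: "length u = p" using u A unfolding W_def by auto
    define Bl where "Bl = (\<lambda>a. blk u a L) ` {0..p - L}"
    have inj: "inj_on (\<lambda>a. blk u a L) {0..p - L}"
    proof (rule inj_onI)
      fix a b assume a: "a \<in> {0..p - L}" and b: "b \<in> {0..p - L}" and e: "blk u a L = blk u b L"
      show "a = b"
      proof (rule ccontr)
        assume "a \<noteq> b"
        then consider "a < b" | "b < a" by linarith
        then show False
        proof cases
          case 1
          have "blk (u @ v0) a L \<noteq> blk (u @ v0) b L" using v0(2) 1 b lu Lp v0(1)
            unfolding NoRep_def W_def by auto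
          then show False using e a b lu Lp by (simp add: blk_append1)
        next
          case 2
          have "blk (u @ v0) b L \<noteq> blk (u @ v0) a L" using v0(2) 2 a lu Lp v0(1)
            unfolding NoRep_def W_def by auto
          then show False using e a b lu Lp by (simp add: blk_append1)
        qed
      qed
    qed
    have cBl: "card Bl = p - L + 1" unfolding Bl_def using card_image[OF inj] Lp by simp
    have BlW: "Bl \<subseteq> W L" unfolding Bl_def using u A lu Lp by (auto intro!: blk_W)
    have sub: "{v \<in> W L. NoRep (u @ v) L} \<subseteq> W L - Bl"
    proof
      fix v assume v: "v \<in> {v \<in> W L. NoRep (u @ v) L}"
      have lv: "length v = L" using v unfolding W_def by auto
      have "v \<notin> Bl"
      proof
        assume "v \<in> Bl"
        then obtain a where a: "a \<in> {0..p - L}" "v = blk u a L" unfolding Bl_def by auto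
        have "a < p" using a Lp L1 by auto
        then have "blk (u @ v) a L \<noteq> blk (u @ v) (length u) L" using v lu lv unfolding NoRep_def by auto
        moreover have "blk (u @ v) (length u) L = v" by (rule blk_append2[OF lv])
        moreover have "blk (u @ v) a L = blk u a L" by (rule blk_append1) (use a lu Lp in auto)
        ultimately show False using a by simp
      qed
      then show "v \<in> W L - Bl" using v by auto
    qed
    have "card {v \<in> W L. NoRep (u @ v) L} \<le> card (W L - Bl)" by (rule card_mono) (use sub W_finite in auto)
    also have "\<dots> = 2 ^ L - (p - L + 1)" using card_Diff_subset[OF finite_subset[OF BlW W_finite] BlW] cBl W_card by simp
    finally show ?thesis .
  qed
  have "card {ys \<in> W (p + L). take p ys \<in> A \<and> NoRep ys L} \<le> (\<Sum>u\<in>A. card {v \<in> W L. NoRep (u @ v) L})"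
    by (rule fibre_bound[OF A])
  also have "\<dots> \<le> (\<Sum>u\<in>A. 2 ^ L - (p - L + 1))" by (rule sum_mono) (rule fib)
  also have "\<dots> = card A * (2 ^ L - (p - L + 1))" by simp
  finally show ?thesis .
qed


lemma one_minus_pow_exp:
  fixes y :: real
  assumes "0 \<le> y" "y \<le> 1"
  shows "(1 - y) ^ T \<le> exp (- (real T * y))"
proof -
  have "(1 - y) ^ T \<le> exp (- y) ^ T"
    by (rule power_mono) (use assms exp_ge_add_one_self[of "- y"] in auto)
  also have "\<dots> = exp (- (real T * y))" by (simp add: exp_of_nat_mult[symmetric])
  finally show ?thesis .
qed

lemma phase:
  assumes A: "A \<subseteq> W K" and L1: "1 \<le> L" and LK: "2 * L \<le> K" and KL: "K < 2 ^ L"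
  shows "real (card {ys \<in> W (2 * K). take K ys \<in> A \<and> NoRep ys L})
    \<le> real (card A) * 2 ^ K * exp (- (real (K div L) * ((real K - real L + 1) / 2 ^ L)))"
proof -
  define T where "T = K div L"
  define Bt where "Bt t = {ys \<in> W (K + t * L). take K ys \<in> A \<and> NoRep ys L}" for t
  define \<beta> where "\<beta> = 2 ^ L - (K - L + 1)"
  have fA: "finite A" using A W_finite finite_subset by blast
  have BtW: "Bt t \<subseteq> W (K + t * L)" for t unfolding Bt_def by auto
  have cB: "t * L \<le> K \<Longrightarrow> card (Bt t) \<le> card A * \<beta> ^ t" for t
  proof (induction t)
    case 0
    have "Bt 0 \<subseteq> A" unfolding Bt_def W_def by auto
    then show ?case using card_mono[OF fA] by simp
  next
    case (Suc t)
    define p where "p = K + t * L"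
    have tl: "t * L \<le> K" using Suc.prems by simp
    have sub: "Bt (Suc t) \<subseteq> {ys \<in> W (p + L). take p ys \<in> Bt t \<and> NoRep ys L}"
    proof
      fix ys assume ys: "ys \<in> Bt (Suc t)"
      have "K + Suc t * L = p + L" unfolding p_def by simp
      then have yW: "ys \<in> W (p + L)" using ys unfolding Bt_def by (metis (no_types, lifting) mem_Collect_eq)
      have "take p ys \<in> W p" by (rule take_W[OF yW]) simp
      moreover have "take K (take p ys) = take K ys" unfolding p_def by (simp add: min_def)
      moreover have "NoRep (take p ys) L" using ys NoRep_take unfolding Bt_def by blast
      ultimately have "take p ys \<in> Bt t" using ys unfolding Bt_def p_def by simp
      then show "ys \<in> {ys \<in> W (p + L). take p ys \<in> Bt t \<and> NoRep ys L}" using yW ys unfolding Bt_def by simp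
    qed
    have fin: "finite {ys \<in> W (p + L). take p ys \<in> Bt t \<and> NoRep ys L}" using W_finite by simp
    have "card (Bt (Suc t)) \<le> card {ys \<in> W (p + L). take p ys \<in> Bt t \<and> NoRep ys L}"
      by (rule card_mono[OF fin sub])
    also have "\<dots> \<le> card (Bt t) * (2 ^ L - (p - L + 1))"
      by (rule count_step) (use BtW[of t] L1 LK in \<open>auto simp: p_def\<close>)
    also have "\<dots> \<le> card (Bt t) * \<beta>"
      unfolding \<beta>_def p_def by (intro mult_le_mono2 diff_le_mono2) simp
    also have "\<dots> \<le> card A * \<beta> ^ t * \<beta>" using Suc.IH[OF tl] by simp
    finally show ?case by (simp add: algebra_simps)
  qed
  have TL: "T * L \<le> K" unfolding T_def by (simp add: div_times_less_eq_dividend)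
  have sub: "{ys \<in> W (2 * K). take K ys \<in> A \<and> NoRep ys L} \<subseteq> {ys \<in> W ((K + T * L) + (K - T * L)). take (K + T * L) ys \<in> Bt T}"
  proof
    fix ys assume ys: "ys \<in> {ys \<in> W (2 * K). take K ys \<in> A \<and> NoRep ys L}"
    have e: "(K + T * L) + (K - T * L) = 2 * K" using TL by simp
    have "take (K + T * L) ys \<in> W (K + T * L)" by (rule take_W) (use ys TL in auto)
    moreover have "take K (take (K + T * L) ys) = take K ys" by (simp add: min_def)
    moreover have "NoRep (take (K + T * L) ys) L" using ys NoRep_take by blast
    ultimately show "ys \<in> {ys \<in> W ((K + T * L) + (K - T * L)). take (K + T * L) ys \<in> Bt T}"
      using ys e unfolding Bt_def by (simp add: mult_2)
  qed
  have "card {ys \<in> W (2 * K). take K ys \<in> A \<and> NoRep ys L} \<le> card {ys \<in> W ((K + T * L) + (K - T * L)). take (K + T * L) ys \<in> Bt T}"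
    by (rule card_mono[OF _ sub]) (simp add: W_finite)
  also have "\<dots> \<le> card (Bt T) * 2 ^ (K - T * L)" by (rule free_ext[OF BtW])
  also have "\<dots> \<le> card A * \<beta> ^ T * 2 ^ (K - T * L)" using cB[OF TL] by simp
  finally have c0: "real (card {ys \<in> W (2 * K). take K ys \<in> A \<and> NoRep ys L}) \<le> real (card A * \<beta> ^ T * 2 ^ (K - T * L))"
    by (simp only: of_nat_le_iff)
  have "real (card A * \<beta> ^ T * 2 ^ (K - T * L)) = real (card A) * real \<beta> ^ T * 2 ^ (K - T * L)" by simp
  with c0 have c1: "real (card {ys \<in> W (2 * K). take K ys \<in> A \<and> NoRep ys L}) \<le> real (card A) * real \<beta> ^ T * 2 ^ (K - T * L)"
    by simp
  define y where "y = (real K - real L + 1) / 2 ^ L"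
  have KL': "K - L + 1 \<le> 2 ^ L" using KL by simp
  have rb: "real \<beta> = 2 ^ L - (real K - real L + 1)"
  proof -
    have "real \<beta> = real (2 ^ L) - real (K - L + 1)" unfolding \<beta>_def using KL' by (simp add: of_nat_diff)
    also have "real (K - L + 1) = real K - real L + 1" using LK by (simp add: of_nat_diff)
    finally show ?thesis by simp
  qed
  have y01: "0 \<le> y" "y \<le> 1"
  proof -
    show "0 \<le> y" unfolding y_def using LK by (simp add: field_simps)
    have r1: "real (K - L + 1) = real K - real L + 1" using LK by (simp add: of_nat_diff)
    have "real (K - L + 1) \<le> real ((2::nat) ^ L)" using KL' by (simp only: of_nat_le_iff)
    then have "real K - real L + 1 \<le> 2 ^ L" unfolding r1 by simp
    then show "y \<le> 1" unfolding y_def by simp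
  qed
  have rb2: "real \<beta> = 2 ^ L * (1 - y)" unfolding rb y_def by (simp add: field_simps)
  have pw: "(2::real) ^ K = (2 ^ L) ^ T * 2 ^ (K - T * L)"
  proof -
    have "K = T * L + (K - T * L)" using TL by simp
    then have "(2::real) ^ K = 2 ^ (T * L) * 2 ^ (K - T * L)" by (metis power_add)
    then show ?thesis by (simp add: power_mult mult.commute)
  qed
  have "real (card A) * real \<beta> ^ T * 2 ^ (K - T * L) = real (card A) * 2 ^ K * (1 - y) ^ T"
    unfolding rb2 pw power_mult_distrib by (simp only: mult_ac)
  also have "\<dots> \<le> real (card A) * 2 ^ K * exp (- (real T * y))"
    by (intro mult_left_mono one_minus_pow_exp y01) auto
  finally show ?thesis using c1 unfolding T_def y_def by linarith
qed


definition Gs :: "nat \<Rightarrow> nat \<Rightarrow> real list set" where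
  "Gs c0 J = {ys \<in> W (2 ^ (J + 1)). \<forall>j\<le>J. NoRep (take (2 ^ (j + 1)) ys) (2 * j + c0)}"

definition gam :: "nat \<Rightarrow> nat \<Rightarrow> real" where
  "gam c0 j = 1 / (2 ^ (c0 + 2) * (2 * real j + real c0))"

lemma gam_nn: "gam c0 j \<ge> 0" unfolding gam_def by simp

lemma gamma_le:
  assumes c0: "c0 \<ge> 1" and good: "2 * (2 * j + c0) \<le> 2 ^ j"
  shows "gam c0 j \<le> real (2 ^ j div (2 * j + c0)) * ((real (2 ^ j) - real (2 * j + c0) + 1) / 2 ^ (2 * j + c0))"
proof -
  define K :: nat where "K = 2 ^ j"
  define L :: nat where "L = 2 * j + c0"
  define T where "T = K div L"
  have L0: "real L > 0" unfolding L_def using c0 by simp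
  have "real (2 * L) \<le> real K" using good unfolding K_def L_def by (simp only: of_nat_le_iff)
  then have good': "2 * real L \<le> real K" by simp
  have "K = T * L + K mod L" unfolding T_def by simp
  moreover have "K mod L < L" unfolding L_def using c0 by simp
  ultimately have "K < T * L + L" by linarith
  then have "real K < real (T * L + L)" by (simp only: of_nat_less_iff)
  then have "real K < real T * real L + real L" by simp
  then have "real T * real L \<ge> real K / 2" using good' by linarith
  then have Tb: "real T \<ge> real K / (2 * real L)" using L0 by (simp add: field_simps)
  have Kb: "real K - real L + 1 \<ge> real K / 2" using good' by linarith
  have "real T * ((real K - real L + 1) / 2 ^ L) \<ge> (real K / (2 * real L)) * ((real K / 2) / 2 ^ L)"
    by (intro mult_mono divide_right_mono) (use Tb Kb L0 in auto)
  moreover have "(real K / (2 * real L)) * ((real K / 2) / 2 ^ L) = gam c0 j"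
  proof -
    define P :: real where "P = 2 ^ (2 * j)"
    have P0: "P > 0" unfolding P_def by simp
    have KK: "real K * real K = P" unfolding K_def P_def by (simp add: power_mult[symmetric] power2_eq_square[symmetric] mult.commute)
    have PL: "(2::real) ^ L = P * 2 ^ c0" unfolding L_def P_def by (simp add: power_add)
    have "(real K / (2 * real L)) * ((real K / 2) / 2 ^ L) = (real K * real K) / (4 * real L * 2 ^ L)"
      by (simp add: field_simps)
    also have "\<dots> = P / (4 * real L * (P * 2 ^ c0))" unfolding KK PL ..
    also have "\<dots> = 1 / (4 * real L * 2 ^ c0)" using P0 L0 by (simp add: field_simps)
    also have "\<dots> = gam c0 j" unfolding gam_def L_def by (simp add: power_add algebra_simps)
    finally show ?thesis .
  qed
  ultimately show ?thesis unfolding T_def K_def L_def by simp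
qed

lemma four_pow: "1 + c \<le> (4::nat) ^ c"
  by (induction c) auto

lemma good_eventually:
  "j \<ge> 2 * c0 + 6 \<Longrightarrow> 2 * (2 * j + c0) \<le> (2::nat) ^ j"
proof (induction j rule: dec_induct)
  case base
  have "(2::nat) ^ (2 * c0 + 6) = 64 * 4 ^ c0" by (simp add: power_add power_mult)
  then show ?case using four_pow[of c0] by simp
next
  case (step j)
  have "(4::nat) \<le> 2 ^ 2" by simp
  also have "\<dots> \<le> 2 ^ j" by (rule power_increasing) (use step in auto)
  finally show ?case using step by simp
qed

lemma iterate:
  assumes c0: "c0 \<ge> 1" and j0: "j0 \<ge> 1" and good: "\<And>j. j \<ge> j0 \<Longrightarrow> 2 * (2 * j + c0) \<le> 2 ^ j"
  shows "real (card (Gs c0 J)) \<le> 2 ^ (2 ^ (J + 1)) * exp (- (\<Sum>j\<in>{j0..J}. gam c0 j))"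
proof (induction J)
  case 0
  have "card (Gs c0 0) \<le> card (W 2)" by (rule card_mono) (auto simp: Gs_def W_finite)
  then have "real (card (Gs c0 0)) \<le> 4" using W_card[of 2] by simp
  moreover have "{j0..0} = {}" using j0 by auto
  ultimately show ?case by simp
next
  case (Suc J)
  define K :: nat where "K = 2 ^ (J + 1)"
  define L :: nat where "L = 2 * (J + 1) + c0"
  have GW: "Gs c0 J \<subseteq> W K" unfolding Gs_def K_def by auto
  have sub: "Gs c0 (Suc J) \<subseteq> {ys \<in> W (2 * K). take K ys \<in> Gs c0 J \<and> NoRep ys L}"
  proof
    fix ys assume ys: "ys \<in> Gs c0 (Suc J)"
    have yW: "ys \<in> W (2 * K)" using ys unfolding Gs_def K_def by simp
    have lys: "length ys = 2 * K" using yW unfolding W_def by simp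
    have "take K ys \<in> W K" by (rule take_W[OF yW]) simp
    moreover have "NoRep (take (2 ^ (j + 1)) (take K ys)) (2 * j + c0)" if "j \<le> J" for j
    proof -
      have "(2::nat) ^ (j + 1) \<le> K" unfolding K_def by (rule power_increasing) (use that in auto)
      then have "take (2 ^ (j + 1)) (take K ys) = take (2 ^ (j + 1)) ys" by (simp add: min_def)
      then show ?thesis using ys that unfolding Gs_def by auto
    qed
    moreover have "NoRep ys L"
    proof -
      have "NoRep (take (2 ^ (Suc J + 1)) ys) (2 * Suc J + c0)" using ys unfolding Gs_def by auto
      moreover have "take (2 ^ (Suc J + 1)) ys = ys" using lys unfolding K_def by simp
      ultimately show ?thesis unfolding L_def by simp
    qed
    ultimately show "ys \<in> {ys \<in> W (2 * K). take K ys \<in> Gs c0 J \<and> NoRep ys L}"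
      using yW unfolding Gs_def K_def by auto
  qed
  have fin: "finite {ys \<in> W (2 * K). take K ys \<in> Gs c0 J \<and> NoRep ys L}" using W_finite by simp
  have c1: "real (card (Gs c0 (Suc J))) \<le> real (card {ys \<in> W (2 * K). take K ys \<in> Gs c0 J \<and> NoRep ys L})"
    using card_mono[OF fin sub] by (simp only: of_nat_le_iff)
  have pK: "(2::real) ^ (2 ^ (Suc J + 1)) = 2 ^ K * 2 ^ K"
    unfolding K_def by (simp add: power_add[symmetric] mult_2[symmetric])
  show ?case
  proof (cases "j0 \<le> Suc J")
    case True
    have g: "2 * L \<le> K" unfolding L_def K_def using good[OF True] by simp
    have KL: "K < 2 ^ L"
    proof -
      have "J + 1 < L" unfolding L_def using c0 by simp
      then show ?thesis unfolding K_def by (rule power_strict_increasing) simp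
    qed
    have "real (card {ys \<in> W (2 * K). take K ys \<in> Gs c0 J \<and> NoRep ys L})
        \<le> real (card (Gs c0 J)) * 2 ^ K * exp (- (real (K div L) * ((real K - real L + 1) / 2 ^ L)))"
      by (rule phase[OF GW _ g KL]) (use c0 in \<open>simp add: L_def\<close>)
    also have "\<dots> \<le> real (card (Gs c0 J)) * 2 ^ K * exp (- gam c0 (Suc J))"
    proof -
      have "gam c0 (Suc J) \<le> real (K div L) * ((real K - real L + 1) / 2 ^ L)"
        unfolding K_def L_def using gamma_le[OF c0 good[OF True]] by simp
      then show ?thesis by (intro mult_left_mono) auto
    qed
    also have "\<dots> \<le> (2 ^ K * exp (- (\<Sum>j\<in>{j0..J}. gam c0 j))) * 2 ^ K * exp (- gam c0 (Suc J))"
      using Suc.IH unfolding K_def by (intro mult_right_mono) auto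
    also have "\<dots> = 2 ^ (2 ^ (Suc J + 1)) * exp (- (\<Sum>j\<in>{j0..Suc J}. gam c0 j))"
      unfolding pK using True by (simp add: exp_add[symmetric] exp_diff algebra_simps)
    finally show ?thesis using c1 by linarith
  next
    case False
    have "card {ys \<in> W (K + K). take K ys \<in> Gs c0 J} \<le> card (Gs c0 J) * 2 ^ K" by (rule free_ext[OF GW])
    moreover have "{ys \<in> W (2 * K). take K ys \<in> Gs c0 J \<and> NoRep ys L} \<subseteq> {ys \<in> W (K + K). take K ys \<in> Gs c0 J}"
      by (auto simp: mult_2)
    moreover have "finite {ys \<in> W (K + K). take K ys \<in> Gs c0 J}" using W_finite by simp
    ultimately have "card {ys \<in> W (2 * K). take K ys \<in> Gs c0 J \<and> NoRep ys L} \<le> card (Gs c0 J) * 2 ^ K"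
      using card_mono order_trans by blast
    then have "real (card {ys \<in> W (2 * K). take K ys \<in> Gs c0 J \<and> NoRep ys L}) \<le> real (card (Gs c0 J) * 2 ^ K)"
      by (simp only: of_nat_le_iff)
    then have "real (card {ys \<in> W (2 * K). take K ys \<in> Gs c0 J \<and> NoRep ys L}) \<le> real (card (Gs c0 J)) * 2 ^ K"
      by simp
    also have "\<dots> \<le> (2 ^ K * exp (- (\<Sum>j\<in>{j0..J}. gam c0 j))) * 2 ^ K"
      using Suc.IH unfolding K_def by (intro mult_right_mono) auto
    also have "\<dots> = 2 ^ (2 ^ (Suc J + 1)) * exp (- (\<Sum>j\<in>{j0..Suc J}. gam c0 j))"
    proof -
      have "{j0..Suc J} = {}" "{j0..J} = {}" using False by auto
      then show ?thesis unfolding pK by simp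
    qed
    finally show ?thesis using c1 by linarith
  qed
qed

lemma gam_diverge:
  assumes c0: "c0 \<ge> 1" and j0: "j0 \<ge> 1"
  shows "\<exists>J. B \<le> (\<Sum>j\<in>{j0..J}. gam c0 j)"
proof (rule ccontr)
  assume "\<not> ?thesis"
  then have bd: "(\<Sum>j\<in>{j0..J}. gam c0 j) < B" for J by (simp add: not_le)
  define f where "f j = (if j0 \<le> j then gam c0 j else 0)" for j
  have fnn: "f j \<ge> 0" for j unfolding f_def using gam_nn by simp
  have "(\<Sum>j\<le>n. f j) = (\<Sum>j\<in>{j0..n}. gam c0 j)" for n
    unfolding f_def by (simp add: sum.If_cases) (rule sum.cong, auto)
  then have "summable f" using bd fnn by (intro bounded_imp_summable[where B = B]) (auto intro: less_imp_le)
  define C where "C = 1 / (2 ^ (c0 + 2) * (2 + real c0))"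
  have C0: "C > 0" unfolding C_def by simp
  have "summable (\<lambda>j. C * inverse (real j))"
  proof (rule summable_comparison_test'[OF \<open>summable f\<close>, of j0])
    fix j assume j: "j0 \<le> j"
    then have j1: "real j \<ge> 1" using j0 by simp
    have "2 * real j + real c0 \<le> (2 + real c0) * real j" using j1 c0 by (simp add: algebra_simps)
    then have "2 ^ (c0 + 2) * (2 * real j + real c0) \<le> 2 ^ (c0 + 2) * ((2 + real c0) * real j)"
      by (intro mult_left_mono) auto
    moreover have "0 < 2 ^ (c0 + 2) * (2 * real j + real c0)" using j1 by simp
    ultimately have "1 / (2 ^ (c0 + 2) * ((2 + real c0) * real j)) \<le> 1 / (2 ^ (c0 + 2) * (2 * real j + real c0))"
      using j1 by (intro divide_left_mono mult_pos_pos) auto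
    moreover have "C * inverse (real j) = 1 / (2 ^ (c0 + 2) * ((2 + real c0) * real j))"
      unfolding C_def by (simp add: field_simps)
    ultimately have "C * inverse (real j) \<le> gam c0 j" unfolding gam_def by simp
    then show "norm (C * inverse (real j)) \<le> f j" unfolding f_def using j C0 j1 by simp
  qed
  then have "summable (\<lambda>j. inverse (real j))" using C0 summable_mult[of "\<lambda>j. C * inverse (real j)" "1 / C"] by simp
  then show False using not_summable_harmonic by blast
qed


lemma pow2_c2: "(2 ^ N :: real) powr (2 / cantor_dim) = 3 ^ (2 * N)"
proof -
  have "(2 ^ N :: real) powr (2 / cantor_dim) = exp (2 / cantor_dim * ln (2 ^ N))"
    by (simp add: powr_def)
  also have "2 / cantor_dim * ln (2 ^ N :: real) = real (2 * N) * ln 3"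
    unfolding cantor_dim_def by (simp add: ln_realpow field_simps)
  also have "exp (real (2 * N) * ln 3) = exp (ln 3) ^ (2 * N)" by (rule exp_of_nat_mult)
  finally show ?thesis by simp
qed

lemma blk_nth: "blk xs a L = blk xs b L \<Longrightarrow> b + L \<le> length xs \<Longrightarrow> a < b \<Longrightarrow> s < L \<Longrightarrow> xs ! (a + s) = xs ! (b + s)"
proof -
  assume e: "blk xs a L = blk xs b L" and bl: "b + L \<le> length xs" and ab: "a < b" and s: "s < L"
  have "blk xs a L ! s = xs ! (a + s)" unfolding blk_def using bl ab s by simp
  moreover have "blk xs b L ! s = xs ! (b + s)" unfolding blk_def using bl s by simp
  ultimately show ?thesis using e by simp
qed

lemma badly_norep:
  fixes \<epsilon> :: real
  assumes x: "x \<in> cantor" and eps: "\<epsilon> > 0"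
    and H: "\<forall>r \<in> \<rat> \<inter> cantor. \<bar>x - r\<bar> \<ge> \<epsilon> * (ln (real (q_int r)) powr (- (2 / cantor_dim))) / real (q_int r)"
    and c1: "1 / \<epsilon> < 3 ^ c1"
  shows "NoRep (map (coding_of x) [0..<2 ^ (j + 1)]) (2 * j + 4 + c1)"
proof (rule ccontr)
  define \<omega> where "\<omega> = coding_of x"
  have w: "is_coding \<omega>" "coding_point \<omega> = x" using cantor_coding[OF x] unfolding \<omega>_def by auto
  define N :: nat where "N = 2 ^ (j + 1)"
  define L where "L = 2 * j + 4 + c1"
  define xs where "xs = map \<omega> [0..<N]"
  assume "\<not> NoRep (map (coding_of x) [0..<2 ^ (j + 1)]) (2 * j + 4 + c1)"
  then obtain a b where ab: "a < b" "b + L \<le> N" and be: "blk xs a L = blk xs b L"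
    unfolding NoRep_def xs_def N_def L_def \<omega>_def by auto
  have eqs: "\<omega> (a + s) = \<omega> (b + s)" if "s < L" for s
  proof -
    have "b + s < N" "a + s < N" using ab that by auto
    then show ?thesis using blk_nth[OF be _ ab(1) that] ab unfolding xs_def by simp
  qed
  define m where "m = b - a"
  have m1: "m \<ge> 1" unfolding m_def using ab by simp
  define \<rho> where "\<rho> i = (if i < a then \<omega> i else \<omega> (a + (i - a) mod m))" for i
  have \<rho>c: "is_coding \<rho>" using w(1) unfolding is_coding_def \<rho>_def by auto
  have \<rho>p: "periodic_from \<rho> a m" unfolding periodic_from_def
  proof (intro conjI allI impI)
    show "1 \<le> m" by (rule m1)
    fix i assume "a \<le> i"
    then have "i + m - a = (i - a) + m" by simp
    then have "(i + m - a) mod m = (i - a) mod m" by simp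
    then show "\<rho> (i + m) = \<rho> i" unfolding \<rho>_def using \<open>a \<le> i\<close> by auto
  qed
  have agree: "i < b + L \<longrightarrow> \<rho> i = \<omega> i" for i
  proof (induction i rule: less_induct)
    case (less i)
    show ?case
    proof
      assume ib: "i < b + L"
      consider "i < a" | "a \<le> i" "i < b" | "b \<le> i" by linarith
      then show "\<rho> i = \<omega> i"
      proof cases
        case 1 then show ?thesis unfolding \<rho>_def by simp
      next
        case 2
        then have "(i - a) mod m = i - a" unfolding m_def by simp
        then show ?thesis unfolding \<rho>_def using 2 by simp
      next
        case 3
        have im: "a \<le> i - m" "i - m < i" using 3 ab m1 unfolding m_def by auto
        have imm: "i - m + m = i" using 3 ab unfolding m_def by simp
        have imb: "i - m = a + (i - b)" using 3 ab unfolding m_def by simp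
        have "\<rho> i = \<rho> ((i - m) + m)" by (simp only: imm)
        also have "\<dots> = \<rho> (i - m)" using \<rho>p im(1) unfolding periodic_from_def by blast
        also have "\<dots> = \<omega> (i - m)" using less.IH[OF im(2)] ib by simp
        also have "\<omega> (i - m) = \<omega> (a + (i - b))" using imb by simp
        also have "\<dots> = \<omega> (b + (i - b))" by (rule eqs) (use ib 3 in auto)
        also have "\<dots> = \<omega> i" using 3 by simp
        finally show ?thesis .
      qed
    qed
  qed
  define r where "r = coding_point \<rho>"
  have rQC: "r \<in> \<rat> \<inter> cantor" unfolding r_def using periodic_rational[OF \<rho>c \<rho>p] cp_in_cantor[OF \<rho>c] by simp
  have close: "\<bar>x - r\<bar> \<le> 1 / 3 ^ (b + L)"
    unfolding r_def using cp_close[OF w(1) \<rho>c, of "b + L"] agree w(2) by auto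
  have qb: "2 \<le> q_int r" "q_int r \<le> 3 ^ a * (3 ^ m - 1)" unfolding r_def by (rule q_int_bounds[OF \<rho>c \<rho>p])+
  have "3 ^ a * (3 ^ m - 1) \<le> (3::nat) ^ a * 3 ^ m" by simp
  also have "\<dots> = 3 ^ b" unfolding m_def using ab by (simp add: power_add[symmetric])
  finally have qb3: "q_int r \<le> 3 ^ b" using qb(2) by linarith
  define q where "q = real (q_int r)"
  define c2 where "c2 = 2 / cantor_dim"
  have c2: "c2 > 0" unfolding c2_def using cantor_dim_pos by simp
  have q2: "q \<ge> 2" using qb(1) unfolding q_def by simp
  have "real (q_int r) \<le> real ((3::nat) ^ b)" using qb3 by (simp only: of_nat_le_iff)
  then have q3: "q \<le> 3 ^ b" unfolding q_def by simp
  have b1: "b \<ge> 1" using ab by simp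
  have lq: "0 < ln q" "ln q \<le> real b * ln 3"
  proof -
    show "0 < ln q" using q2 by simp
    have "ln q \<le> ln (3 ^ b)" using q2 q3 by (subst ln_le_cancel_iff) auto
    then show "ln q \<le> real b * ln 3" by (simp add: ln_realpow)
  qed
  have ps1: "(real b * ln 3) powr (- c2) \<le> ln q powr (- c2)"
    by (rule powr_mono2') (use c2 lq in auto)
  have bN: "real b * ln 3 \<le> 2 ^ (j + 2)"
  proof -
    have "b < N" using ab(2) unfolding L_def by simp
    then have "b \<le> 2 ^ (j + 1)" unfolding N_def by simp
    then have "real b \<le> real ((2::nat) ^ (j + 1))" by (simp only: of_nat_le_iff)
    then have "real b \<le> 2 ^ (j + 1)" by simp
    moreover have "ln (3::real) \<le> 2" using ln_le_minus_one[of 3] by simp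
    ultimately have "real b * ln 3 \<le> 2 ^ (j + 1) * 2" by (intro mult_mono) auto
    then show ?thesis by simp
  qed
  have ps2: "(2 ^ (j + 2)) powr (- c2) \<le> (real b * ln 3) powr (- c2)"
    by (rule powr_mono2') (use c2 bN b1 in auto)
  have ps3: "(2 ^ (j + 2) :: real) powr (- c2) = 1 / 3 ^ (2 * (j + 2))"
    unfolding powr_minus_divide c2_def pow2_c2 by simp
  have "\<epsilon> / (3 ^ (2 * (j + 2)) * 3 ^ b) \<le> \<epsilon> * (ln q powr (- c2)) / q"
  proof -
    have "1 / 3 ^ (2 * (j + 2)) \<le> ln q powr (- c2)" using ps1 ps2 ps3 by linarith
    then have "\<epsilon> * (1 / 3 ^ (2 * (j + 2))) \<le> \<epsilon> * ln q powr (- c2)" using eps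
      by (intro mult_left_mono) auto
    then have "\<epsilon> / 3 ^ (2 * (j + 2)) \<le> \<epsilon> * ln q powr (- c2)" by simp
    then have "\<epsilon> / 3 ^ (2 * (j + 2)) / 3 ^ b \<le> \<epsilon> * ln q powr (- c2) / q"
      using q2 q3 eps by (intro frac_le) auto
    then show ?thesis by (simp add: field_simps)
  qed
  moreover have "\<epsilon> * (ln q powr (- c2)) / q \<le> \<bar>x - r\<bar>" using H rQC unfolding q_def c2_def by blast
  moreover have "1 / 3 ^ (b + L) < \<epsilon> / (3 ^ (2 * (j + 2)) * 3 ^ b)"
  proof -
    have "1 / 3 ^ c1 < \<epsilon>" using c1 eps by (simp add: field_simps)
    moreover have "(3::real) ^ (b + L) = (3 ^ (2 * (j + 2)) * 3 ^ b) * 3 ^ c1"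
    proof -
      have "b + L = 2 * (j + 2) + b + c1" unfolding L_def by simp
      then show ?thesis by (simp only: power_add)
    qed
    ultimately show ?thesis by (simp add: field_simps)
  qed
  ultimately show False using close by linarith
qed


lemma half_sum: "(\<Sum>k<M. 1 / 2 ^ (k + 1) :: real) = 1 - 1 / 2 ^ M"
  by (induction M) (auto simp: field_simps)

lemma choose_J:
  assumes c0: "c0 \<ge> 1" and eta: "\<eta> > 0"
  shows "\<exists>J. N0 \<le> J \<and> real (card (Gs c0 J)) \<le> 2 ^ (2 ^ (J + 1)) * \<eta>"
proof -
  define j0 where "j0 = 2 * c0 + 6"
  have j0: "j0 \<ge> 1" unfolding j0_def by simp
  have good: "\<And>j. j \<ge> j0 \<Longrightarrow> 2 * (2 * j + c0) \<le> 2 ^ j" unfolding j0_def by (rule good_eventually)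
  obtain J' where J': "- ln \<eta> \<le> (\<Sum>j\<in>{j0..J'}. gam c0 j)" using gam_diverge[OF c0 j0] by blast
  define J where "J = max J' N0"
  have "(\<Sum>j\<in>{j0..J'}. gam c0 j) \<le> (\<Sum>j\<in>{j0..J}. gam c0 j)"
    by (rule sum_mono2) (auto simp: J_def gam_nn)
  then have sJ: "- ln \<eta> \<le> (\<Sum>j\<in>{j0..J}. gam c0 j)" using J' by linarith
  have "real (card (Gs c0 J)) \<le> 2 ^ (2 ^ (J + 1)) * exp (- (\<Sum>j\<in>{j0..J}. gam c0 j))"
    by (rule iterate[OF c0 j0 good])
  also have "\<dots> \<le> 2 ^ (2 ^ (J + 1)) * exp (ln \<eta>)"
    using sJ by (intro mult_left_mono) auto
  also have "\<dots> = 2 ^ (2 ^ (J + 1)) * \<eta>" using eta by simp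
  finally show ?thesis unfolding J_def by (intro exI[of _ "max J' N0"]) simp
qed

lemma part2_null:
  "hausdorff cantor_dim {x \<in> cantor. \<not> symb_well_approx (\<lambda>q. ln q powr (- (2 / cantor_dim))) x} = 0"
proof (rule hausdorff_zero)
  fix N0 :: nat and e :: real assume e: "e > 0"
  define \<psi> where "\<psi> = (\<lambda>q::real. ln q powr (- (2 / cantor_dim)))"
  define E where "E = {x \<in> cantor. \<not> symb_well_approx \<psi> x}"
  define c0 where "c0 k = k + 5" for k :: nat
  define J where "J k = (SOME J. N0 \<le> J \<and> real (card (Gs (c0 k) J)) \<le> 2 ^ (2 ^ (J + 1)) * (e / 2 ^ (k + 1)))" for k
  have Jp: "N0 \<le> J k \<and> real (card (Gs (c0 k) (J k))) \<le> 2 ^ (2 ^ (J k + 1)) * (e / 2 ^ (k + 1))" for k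
    unfolding J_def by (rule someI_ex) (rule choose_J, use e in \<open>auto simp: c0_def\<close>)
  define S where "S k = Gs (c0 k) (J k)" for k
  define lev :: "nat \<Rightarrow> nat" where "lev k = 2 ^ (J k + 1)" for k
  have "hausdorff_pre cantor_dim (1 / 3 ^ N0) E \<le> ennreal e"
  proof (rule hcover)
    show "finite (S k)" for k unfolding S_def Gs_def using W_finite by simp
    show "1 / 3 ^ lev k \<le> (1 / 3 ^ N0 :: real)" for k
    proof -
      have "N0 \<le> lev k" unfolding lev_def using Jp[of k] less_exp[of "J k + 1"] by simp
      then have "(3::real) ^ N0 \<le> 3 ^ lev k" by (rule power_increasing) simp
      then show ?thesis by (intro divide_left_mono) auto
    qed
    show "E \<subseteq> cantor" unfolding E_def by auto
    show "\<exists>k. map (coding_of x) [0..<lev k] \<in> S k" if xE: "x \<in> E" for x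
    proof -
      have xC: "x \<in> cantor" and b: "badly_symb_approx \<psi> x" using xE unfolding E_def symb_well_approx_def by auto
      obtain \<epsilon> where eps: "\<epsilon> > 0" and H: "\<forall>r \<in> \<rat> \<inter> cantor. \<bar>x - r\<bar> \<ge> \<epsilon> * \<psi> (real (q_int r)) / real (q_int r)"
        using b unfolding badly_symb_approx_def by blast
      obtain n :: nat where n: "n > 0" "inverse (real n) < \<epsilon>" using ex_inverse_of_nat_less[OF eps] by blast
      define k where "k = n - 1"
      have nk: "n = k + 1" unfolding k_def using n by simp
      define \<epsilon>' where "\<epsilon>' = 1 / real n"
      have e'0: "\<epsilon>' > 0" unfolding \<epsilon>'_def using n by simp
      have H': "\<forall>r \<in> \<rat> \<inter> cantor. \<bar>x - r\<bar> \<ge> \<epsilon>' * (ln (real (q_int r)) powr (- (2 / cantor_dim))) / real (q_int r)"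
      proof
        fix r assume r: "r \<in> \<rat> \<inter> cantor"
        have "\<epsilon>' * \<psi> (real (q_int r)) / real (q_int r) \<le> \<epsilon> * \<psi> (real (q_int r)) / real (q_int r)"
          using n unfolding \<epsilon>'_def \<psi>_def by (intro divide_right_mono mult_right_mono) (auto simp: field_simps)
        moreover have "\<epsilon> * \<psi> (real (q_int r)) / real (q_int r) \<le> \<bar>x - r\<bar>" using H r by blast
        ultimately show "\<bar>x - r\<bar> \<ge> \<epsilon>' * (ln (real (q_int r)) powr (- (2 / cantor_dim))) / real (q_int r)"
          unfolding \<psi>_def by linarith
      qed
      have c1: "1 / \<epsilon>' < 3 ^ n"
      proof -
        have "n < 3 ^ n" by (induction n) auto
        then have "real n < real ((3::nat) ^ n)" by (simp only: of_nat_less_iff)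
        then show ?thesis unfolding \<epsilon>'_def by simp
      qed
      note nr = badly_norep[OF xC e'0 H' c1]
      define w where "w = coding_of x"
      have w: "is_coding w" using cantor_coding[OF xC] unfolding w_def by simp
      have "map w [0..<2 ^ (J k + 1)] \<in> Gs (c0 k) (J k)"
        unfolding Gs_def
      proof (intro CollectI conjI allI impI)
        show "map w [0..<2 ^ (J k + 1)] \<in> W (2 ^ (J k + 1))" unfolding W_def using w unfolding is_coding_def by auto
        fix j assume j: "j \<le> J k"
        have "(2::nat) ^ (j + 1) \<le> 2 ^ (J k + 1)" by (rule power_increasing) (use j in auto)
        then have "take (2 ^ (j + 1)) (map w [0..<2 ^ (J k + 1)]) = map w [0..<2 ^ (j + 1)]"
          by (simp add: take_map min_def)
        moreover have "2 * j + c0 k = 2 * j + 4 + n" unfolding c0_def nk by simp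
        ultimately show "NoRep (take (2 ^ (j + 1)) (map w [0..<2 ^ (J k + 1)])) (2 * j + c0 k)"
          using nr[of j] unfolding w_def by (simp add: add.assoc)
      qed
      then show ?thesis unfolding S_def lev_def w_def by blast
    qed
    show "(\<Sum>k<M. real (card (S k)) / 2 ^ lev k) \<le> e" for M
    proof -
      have "(\<Sum>k<M. real (card (S k)) / 2 ^ lev k) \<le> (\<Sum>k<M. e * (1 / 2 ^ (k + 1)))"
      proof (rule sum_mono)
        fix k
        have "real (card (S k)) \<le> 2 ^ lev k * (e / 2 ^ (k + 1))" using Jp[of k] unfolding S_def lev_def by simp
        then show "real (card (S k)) / 2 ^ lev k \<le> e * (1 / 2 ^ (k + 1))" by (simp add: field_simps)
      qed
      also have "\<dots> = e * (\<Sum>k<M. 1 / 2 ^ (k + 1))" by (rule sum_distrib_left[symmetric])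
      also have "\<dots> = e * (1 - 1 / 2 ^ M)" by (simp only: half_sum)
      also have "\<dots> \<le> e" using e by (simp add: mult_left_le)
      finally show ?thesis .
    qed
  qed
  then show "hausdorff_pre cantor_dim (1 / 3 ^ N0)
      {x \<in> cantor. \<not> symb_well_approx (\<lambda>q. ln q powr (- (2 / cantor_dim))) x} \<le> ennreal e"
    unfolding E_def \<psi>_def .
qed

theorem corollary4p6:
  shows "(\<forall>\<epsilon>>0. mu_ae (\<lambda>x. badly_symb_approx
            (\<lambda>q. ln q powr (- (2 / cantor_dim + \<epsilon>))) x))
       \<and> mu_ae (\<lambda>x. symb_well_approx (\<lambda>q. ln q powr (- (2 / cantor_dim))) x)"
proof
  show "\<forall>\<epsilon>>0. mu_ae (\<lambda>x. badly_symb_approx (\<lambda>q. ln q powr (- (2 / cantor_dim + \<epsilon>))) x)"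
  proof (intro allI impI)
    fix \<epsilon> :: real assume "\<epsilon> > 0"
    show "mu_ae (\<lambda>x. badly_symb_approx (\<lambda>q. ln q powr (- (2 / cantor_dim + \<epsilon>))) x)"
      by (rule mu_ae_from_null) (rule part1_null[OF \<open>\<epsilon> > 0\<close>])
  qed
  show "mu_ae (\<lambda>x. symb_well_approx (\<lambda>q. ln q powr (- (2 / cantor_dim))) x)"
    by (rule mu_ae_from_null) (rule part2_null)
qed


end
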